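(* In the algorithm setup, for every variable $i$, factor $a\in\partial i$ and $0\le\ell\le L-1$: $\mathbb E[u^{\ell+1}_{i\to a}\mid\mathcal G_i^\ell]=0$ and $\mathbb E[u^{\ell+1}_i\mid\mathcal G_i^\ell]=0$.
   Context: Algorithm setup. Fix $r\ge2$ and a predicate $f:\{\pm1\}^r\to\{0,1\}$, identified with its multilinear extension $f(x)=\sum_{S\subseteq[r]}\hat f(S)\prod_{\iota\in S}x_\iota$ on $\mathbb R^r$, and assume $\hat f(S)=0$ whenever $|S|=1$. Fix $\delta>0$ and let $L=\lfloor1/\delta\rfloor$. Let $G=(V,E)$ be a hypergraph whose hyperedges (factors) $a$ are ordered $r$-tuples $\partial a=(v_{a,1},\dots,v_{a,r})$ of distinct vertices (variables), which is $d$-index-regular: every variable lies in exactly $d$ factors, and for each $\iota\in[r]$ it is the $\iota$-th entry of exactly $d/r$ factors. Write $\partial i$ for the set of factors containing $i$. Assume the bipartite variable–factor incidence graph (factor graph) of $G$ has no cycle of length less than $4L+4$. For a factor $a$ and $j\in\partial a$, $\mathsf D_{j;a}f$ is the partial derivative of (multilinear) $f$ in the coordinate $\iota$ with $v_{a,\iota}=j$. Fix $K>0$ and functions $F_{\to,\ell},F_\ell:\mathbb R^\ell\to[-K,K]$ for $0\le\ell\le L-1$ (constants when $\ell=0$). Randomness: $z_i^0$, $i\in V$, i.i.d. $\mathcal N(0,\delta)$; set $z^0_{i\to a}=z_i^0$, $w_i^0=w^0_{i\to a}=0$. For $\ell=0,\dots,L-1$: $A^\ell_{i\to a}=F_{\to,\ell}(u^1_{i\to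 a},\dots,u^\ell_{i\to a})$, $A^\ell_i=F_\ell(u^1_i,\dots,u^\ell_i)$; with $\mathbf z^\ell_{\partial b\to b}=(z^\ell_{v_{b,1}\to b},\dots,z^\ell_{v_{b,r}\to b})$, $w^{\ell+1}_{i\to a}=(d-1)^{-1/2}\sum_{b\in\partial i\setminus a}\mathsf D_{i;b}f(\mathbf z^\ell_{\partial b\to b})$, $u^{\ell+1}_{i\to a}=w^{\ell+1}_{i\to a}-w^\ell_{i\to a}$, $z^{\ell+1}_{i\to a}=z_i^0+\sum_{s=1}^{\ell+1}A^{s-1}_{i\to a}u^s_{i\to a}$; $w^{\ell+1}_i=d^{-1/2}\sum_{b\in\partial i}\mathsf D_{i;b}f(\mathbf z^\ell_{\partial b\to b})$, $u^{\ell+1}_i=w^{\ell+1}_i-w^\ell_i$, $z^{\ell+1}_i=z_i^0+\sum_{s=1}^{\ell+1}A^{s-1}_iu^s_i$. Sigma-algebras: the distance between variables $i,j$ is the least $k$ such that there are variables $i=v_0,\dots,v_k=j$ with consecutive ones sharing a factor. $\mathsf B_i(\ell)$ is the set of variables at distance $\le\ell$ from $i$; $\mathsf B_{i\to a}(\ell)$ is the set of variables reachable from $i$ by such a path of length $\le\ell$ whose first step does not use factor $a$ (including $i$ itself). $\mathcal G_i^\ell=\sigma(z_j^0:j\in\mathsf B_i(\ell))$, $\mathcal G_{i\to a}^\ell=\sigma(z_j^0:j\in\mathsf B_{i\to a}(\ell))$. *)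

theory Defs
  imports "HOL-Probability.Probability"
begin

definition cube :: "nat \<Rightarrow> (nat \<Rightarrow> real) set" where
  "cube r = PiE {..<r} (\<lambda>_. {-1, 1})"

definition fcoef :: "nat \<Rightarrow> ((nat \<Rightarrow> real) \<Rightarrow> real) \<Rightarrow> nat set \<Rightarrow> real" where
  "fcoef r f S = (\<Sum>x\<in>cube r. f x * (\<Prod>\<iota>\<in>S. x \<iota>)) / 2 ^ r"

definition mlext :: "nat \<Rightarrow> ((nat \<Rightarrow> real) \<Rightarrow> real) \<Rightarrow> (nat \<Rightarrow> real) \<Rightarrow> real" where
  "mlext r f x = (\<Sum>S\<in>Pow {..<r}. fcoef r f S * (\<Prod>\<iota>\<in>S. x \<iota>))"

definition mlderiv :: "nat \<Rightarrow> ((nat \<Rightarrow> real) \<Rightarrow> real) \<Rightarrow> nat \<Rightarrow> (nat \<Rightarrow> real) \<Rightarrow> real" where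
  "mlderiv r f \<iota> x = (\<Sum>S\<in>{S. S \<subseteq> {..<r} \<and> \<iota> \<in> S}. fcoef r f S * (\<Prod>\<kappa>\<in>S - {\<iota>}. x \<kappa>))"

text \<open>vtx a \<iota> is the \<iota>-th entry (\<iota> < r) of the factor a.\<close>
definition hypergraph :: "'v set \<Rightarrow> 'f set \<Rightarrow> ('f \<Rightarrow> nat \<Rightarrow> 'v) \<Rightarrow> nat \<Rightarrow> bool" where
  "hypergraph V E vtx r \<longleftrightarrow> finite V \<and> finite E \<and>
     (\<forall>a\<in>E. inj_on (vtx a) {..<r} \<and> (\<forall>\<iota><r. vtx a \<iota> \<in> V))"

definition fac_of :: "'f set \<Rightarrow> ('f \<Rightarrow> nat \<Rightarrow> 'v) \<Rightarrow> nat \<Rightarrow> 'v \<Rightarrow> 'f set" where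
  "fac_of E vtx r i = {b\<in>E. i \<in> vtx b ` {..<r}}"

definition pos_in :: "('f \<Rightarrow> nat \<Rightarrow> 'v) \<Rightarrow> nat \<Rightarrow> 'f \<Rightarrow> 'v \<Rightarrow> nat" where
  "pos_in vtx r b i = (THE \<iota>. \<iota> < r \<and> vtx b \<iota> = i)"

definition index_regular :: "'v set \<Rightarrow> 'f set \<Rightarrow> ('f \<Rightarrow> nat \<Rightarrow> 'v) \<Rightarrow> nat \<Rightarrow> nat \<Rightarrow> bool" where
  "index_regular V E vtx r d \<longleftrightarrow>
     (\<forall>i\<in>V. card (fac_of E vtx r i) = d \<and>
        (\<forall>\<iota><r. real (card {a\<in>E. vtx a \<iota> = i}) = real d / real r))"

text \<open>A cycle of length 2k in the bipartite variable-factor incidence graph: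
  distinct variables vs 0..vs (k-1), distinct factors fs 0..fs (k-1), with
  vs t and vs ((t+1) mod k) both in fs t.\<close>
definition fg_cycle :: "'f set \<Rightarrow> ('f \<Rightarrow> nat \<Rightarrow> 'v) \<Rightarrow> nat \<Rightarrow> nat \<Rightarrow> bool" where
  "fg_cycle E vtx r k \<longleftrightarrow> 2 \<le> k \<and> (\<exists>vs :: nat \<Rightarrow> 'v. \<exists>fs :: nat \<Rightarrow> 'f.
      inj_on vs {..<k} \<and> inj_on fs {..<k} \<and>
      (\<forall>t<k. fs t \<in> E \<and> vs t \<in> vtx (fs t) ` {..<r} \<and> vs ((t + 1) mod k) \<in> vtx (fs t) ` {..<r}))"

definition girth_ge :: "'f set \<Rightarrow> ('f \<Rightarrow> nat \<Rightarrow> 'v) \<Rightarrow> nat \<Rightarrow> nat \<Rightarrow> bool" where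
  "girth_ge E vtx r g \<longleftrightarrow> (\<forall>k. 2 * k < g \<longrightarrow> \<not> fg_cycle E vtx r k)"

definition ball_var :: "'v set \<Rightarrow> 'f set \<Rightarrow> ('f \<Rightarrow> nat \<Rightarrow> 'v) \<Rightarrow> nat \<Rightarrow> 'v \<Rightarrow> nat \<Rightarrow> 'v set" where
  "ball_var V E vtx r i l = {j\<in>V. \<exists>k\<le>l. \<exists>p :: nat \<Rightarrow> 'v. p 0 = i \<and> p k = j \<and>
      (\<forall>t<k. p t \<in> V \<and> (\<exists>b\<in>E. p t \<in> vtx b ` {..<r} \<and> p (Suc t) \<in> vtx b ` {..<r}))}"

text \<open>Product space of i.i.d. N(0,\<delta>) variables z_i^0 = \<omega> i, i \<in> V.\<close>
definition gauss_space :: "real \<Rightarrow> 'v set \<Rightarrow> ('v \<Rightarrow> real) measure" where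
  "gauss_space \<delta> V = PiM V (\<lambda>_. density lborel (normal_density 0 (sqrt \<delta>)))"

definition gen_sigma :: "('v \<Rightarrow> real) measure \<Rightarrow> 'v set \<Rightarrow> ('v \<Rightarrow> real) measure" where
  "gen_sigma M B = sigma (space M)
      {(\<lambda>\<omega>. \<omega> j) -` A \<inter> space M | j A. j \<in> B \<and> A \<in> sets borel}"

text \<open>H is a history of messages: H s i a = w^s_{i\<rightarrow>a} (for one sample \<omega>).\<close>
definition u_of :: "(nat \<Rightarrow> 'v \<Rightarrow> 'f \<Rightarrow> real) \<Rightarrow> nat \<Rightarrow> 'v \<Rightarrow> 'f \<Rightarrow> real" where
  "u_of H s i a = H s i a - H (s - 1) i a"

text \<open>z^l_{i\<rightarrow>a} = z_i^0 + sum_{s=1}^l A^{s-1}_{i\<rightarrow>a} u^s_{i\<rightarrow>a},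
  A^{s-1}_{i\<rightarrow>a} = F_{\<rightarrow>,s-1}(u^1,...,u^{s-1}); the vector argument of F is
  represented as an element of PiE {1..s-1} UNIV.\<close>
definition z_of :: "(nat \<Rightarrow> (nat \<Rightarrow> real) \<Rightarrow> real) \<Rightarrow> ('v \<Rightarrow> real) \<Rightarrow>
    (nat \<Rightarrow> 'v \<Rightarrow> 'f \<Rightarrow> real) \<Rightarrow> nat \<Rightarrow> 'v \<Rightarrow> 'f \<Rightarrow> real" where
  "z_of Fto \<omega> H l i a = \<omega> i +
     (\<Sum>s\<in>{1..l}. Fto (s - 1) (restrict (\<lambda>t. u_of H t i a) {1..s - 1}) * u_of H s i a)"

definition w_new :: "nat \<Rightarrow> ((nat \<Rightarrow> real) \<Rightarrow> real) \<Rightarrow> nat \<Rightarrow> 'f set \<Rightarrow> ('f \<Rightarrow> nat \<Rightarrow> 'v) \<Rightarrow>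
    (nat \<Rightarrow> (nat \<Rightarrow> real) \<Rightarrow> real) \<Rightarrow> ('v \<Rightarrow> real) \<Rightarrow>
    (nat \<Rightarrow> 'v \<Rightarrow> 'f \<Rightarrow> real) \<Rightarrow> nat \<Rightarrow> 'v \<Rightarrow> 'f \<Rightarrow> real" where
  "w_new r f d E vtx Fto \<omega> H l i a =
     (1 / sqrt (real d - 1)) *
       (\<Sum>b\<in>fac_of E vtx r i - {a}.
          mlderiv r f (pos_in vtx r b i) (\<lambda>\<iota>. z_of Fto \<omega> H l (vtx b \<iota>) b))"

text \<open>whist l s = w^s (valid for s \<le> l).\<close>
primrec whist :: "nat \<Rightarrow> ((nat \<Rightarrow> real) \<Rightarrow> real) \<Rightarrow> nat \<Rightarrow> 'f set \<Rightarrow> ('f \<Rightarrow> nat \<Rightarrow> 'v) \<Rightarrow>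
    (nat \<Rightarrow> (nat \<Rightarrow> real) \<Rightarrow> real) \<Rightarrow> ('v \<Rightarrow> real) \<Rightarrow> nat \<Rightarrow> nat \<Rightarrow> 'v \<Rightarrow> 'f \<Rightarrow> real" where
  "whist r f d E vtx Fto \<omega> 0 = (\<lambda>s i a. 0)"
| "whist r f d E vtx Fto \<omega> (Suc l) =
     (whist r f d E vtx Fto \<omega> l)
       (Suc l := w_new r f d E vtx Fto \<omega> (whist r f d E vtx Fto \<omega> l) l)"

definition wmsg :: "nat \<Rightarrow> ((nat \<Rightarrow> real) \<Rightarrow> real) \<Rightarrow> nat \<Rightarrow> 'f set \<Rightarrow> ('f \<Rightarrow> nat \<Rightarrow> 'v) \<Rightarrow>
    (nat \<Rightarrow> (nat \<Rightarrow> real) \<Rightarrow> real) \<Rightarrow> nat \<Rightarrow> 'v \<Rightarrow> 'f \<Rightarrow> ('v \<Rightarrow> real) \<Rightarrow> real" where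
  "wmsg r f d E vtx Fto l i a \<omega> = whist r f d E vtx Fto \<omega> l l i a"

definition umsg :: "nat \<Rightarrow> ((nat \<Rightarrow> real) \<Rightarrow> real) \<Rightarrow> nat \<Rightarrow> 'f set \<Rightarrow> ('f \<Rightarrow> nat \<Rightarrow> 'v) \<Rightarrow>
    (nat \<Rightarrow> (nat \<Rightarrow> real) \<Rightarrow> real) \<Rightarrow> nat \<Rightarrow> 'v \<Rightarrow> 'f \<Rightarrow> ('v \<Rightarrow> real) \<Rightarrow> real" where
  "umsg r f d E vtx Fto l i a \<omega> =
     wmsg r f d E vtx Fto l i a \<omega> - wmsg r f d E vtx Fto (l - 1) i a \<omega>"

definition wfull :: "nat \<Rightarrow> ((nat \<Rightarrow> real) \<Rightarrow> real) \<Rightarrow> nat \<Rightarrow> 'f set \<Rightarrow> ('f \<Rightarrow> nat \<Rightarrow> 'v) \<Rightarrow>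
    (nat \<Rightarrow> (nat \<Rightarrow> real) \<Rightarrow> real) \<Rightarrow> nat \<Rightarrow> 'v \<Rightarrow> ('v \<Rightarrow> real) \<Rightarrow> real" where
  "wfull r f d E vtx Fto l i \<omega> =
     (if l = 0 then 0 else
       (1 / sqrt (real d)) *
         (\<Sum>b\<in>fac_of E vtx r i.
            mlderiv r f (pos_in vtx r b i)
              (\<lambda>\<iota>. z_of Fto \<omega> (whist r f d E vtx Fto \<omega> (l - 1)) (l - 1) (vtx b \<iota>) b)))"

definition ufull :: "nat \<Rightarrow> ((nat \<Rightarrow> real) \<Rightarrow> real) \<Rightarrow> nat \<Rightarrow> 'f set \<Rightarrow> ('f \<Rightarrow> nat \<Rightarrow> 'v) \<Rightarrow>
    (nat \<Rightarrow> (nat \<Rightarrow> real) \<Rightarrow> real) \<Rightarrow> nat \<Rightarrow> 'v \<Rightarrow> ('v \<Rightarrow> real) \<Rightarrow> real" where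
  "ufull r f d E vtx Fto l i \<omega> =
     wfull r f d E vtx Fto l i \<omega> - wfull r f d E vtx Fto (l - 1) i \<omega>"

end

theory Submission
  imports Defs
begin

definition set0 :: "'v set \<Rightarrow> ('v \<Rightarrow> real) \<Rightarrow> ('v \<Rightarrow> real)" where
  "set0 Q w = (\<lambda>j. if j \<in> Q then 0 else w j)"

locale gsp =
  fixes V :: "'v set" and \<delta> :: real
  assumes finV: "finite V" and dpos: "0 < \<delta>"
begin

abbreviation "NN \<equiv> density lborel (normal_density 0 (sqrt \<delta>))"
abbreviation "MM \<equiv> gauss_space \<delta> V"

lemma spos: "0 < sqrt \<delta>" using dpos by simp

lemma N_prob: "prob_space NN" by (rule prob_space_normal_density[OF spos])

lemma MM_eq: "MM = PiM V (\<lambda>_. NN)" by (simp add: gauss_space_def)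

lemma PPS: "product_prob_space (\<lambda>_::'v. NN)"
  unfolding product_prob_space_def product_prob_space_axioms_def product_sigma_finite_def
  using N_prob by (auto simp: prob_space_imp_sigma_finite)

lemma PSF: "product_sigma_finite (\<lambda>_::'v. NN)"
  using PPS unfolding product_prob_space_def by auto

lemma MM_prob: "prob_space MM"
  unfolding MM_eq by (rule prob_space_PiM) (rule N_prob)

lemma space_MM: "space MM = PiE V (\<lambda>_. UNIV)"
  unfolding MM_eq by (simp add: space_PiM)

lemma sets_MM: "sets MM = sets (PiM V (\<lambda>_. borel :: real measure))"
  unfolding MM_eq by (intro sets_PiM_cong) auto

lemma meas_MM_iff: "h \<in> borel_measurable MM \<longleftrightarrow> h \<in> borel_measurable (PiM V (\<lambda>_. borel :: real measure))"
  by (simp only: measurable_cong_sets[OF sets_MM refl])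

lemma ndens_meas: "normal_density 0 (sqrt \<delta>) \<in> borel_measurable lborel" by simp

lemma int_N_id: "integrable NN (\<lambda>x. x)" and intg_N_id: "integral\<^sup>L NN (\<lambda>x. x) = 0"
proof -
  have h: "has_bochner_integral lborel (\<lambda>x. normal_density 0 (sqrt \<delta>) x * (x - 0)^(2 * 0 + 1)) 0"
    by (rule normal_moment_odd[OF spos])
  have h2: "has_bochner_integral lborel (\<lambda>x. normal_density 0 (sqrt \<delta>) x *\<^sub>R x) 0"
    using h by simp
  show "integrable NN (\<lambda>x. x)"
    using integrable.intros[OF h2] by (subst integrable_density) (auto simp: normal_density_nonneg)
  show "integral\<^sup>L NN (\<lambda>x. x) = 0"
    using h2 by (subst integral_density) (auto simp: normal_density_nonneg has_bochner_integral_integral_eq)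
qed

lemma int_N_abspow: "integrable NN (\<lambda>x. \<bar>x\<bar> ^ k)"
proof -
  have "integrable lborel (\<lambda>x. normal_density 0 (sqrt \<delta>) x * \<bar>x - 0\<bar>^k)"
    by (rule integrable_normal_moment_abs[OF spos])
  then show ?thesis
    by (subst integrable_density) (auto simp: normal_density_nonneg)
qed

lemma int_N_poly: "integrable NN (\<lambda>x. (1 + \<bar>x\<bar>) ^ p)"
proof -
  have eq: "(\<lambda>x::real. (1 + \<bar>x\<bar>) ^ p) = (\<lambda>x. \<Sum>k\<le>p. of_nat (p choose k) * \<bar>x\<bar> ^ k)"
    by (rule ext, subst add.commute, subst binomial_ring) simp
  show ?thesis unfolding eq
    by (auto intro!: Bochner_Integration.integrable_sum Bochner_Integration.integrable_mult_right int_N_abspow)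
qed

definition Mf :: "('v \<Rightarrow> real) \<Rightarrow> real" where
  "Mf w = (\<Prod>j\<in>V. 1 + \<bar>w j\<bar>)"

lemma Mf_ge1: "1 \<le> Mf w"
  unfolding Mf_def by (rule prod_ge_1) auto

lemma Mf_pos: "0 < Mf w" using Mf_ge1[of w] by simp

lemma int_Mf: "integrable MM (\<lambda>w. Mf w ^ p)"
proof -
  have eq: "(\<lambda>w. Mf w ^ p) = (\<lambda>w. \<Prod>j\<in>V. (\<lambda>j x. (1 + \<bar>x\<bar>) ^ p) j (w j))"
    unfolding Mf_def by (simp add: prod_power_distrib)
  show ?thesis unfolding eq MM_eq
    by (rule product_sigma_finite.product_integrable_prod[OF PSF finV int_N_poly])
qed

definition pb :: "(('v \<Rightarrow> real) \<Rightarrow> real) \<Rightarrow> bool" where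
  "pb h \<longleftrightarrow> (\<exists>C\<ge>0. \<exists>p. \<forall>w\<in>space MM. \<bar>h w\<bar> \<le> C * Mf w ^ p)"

lemma pb_integrable:
  assumes m: "h \<in> borel_measurable MM" and b: "pb h"
  shows "integrable MM h"
proof -
  obtain C p where C: "C \<ge> 0" and hb: "\<And>w. w \<in> space MM \<Longrightarrow> \<bar>h w\<bar> \<le> C * Mf w ^ p"
    using b unfolding pb_def by blast
  have i: "integrable MM (\<lambda>w. C * Mf w ^ p)"
    by (intro integrable_mult_right int_Mf)
  show ?thesis
  proof (rule Bochner_Integration.integrable_bound[OF i m])
    show "AE x in MM. norm (h x) \<le> norm (C * Mf x ^ p)"
      using hb C Mf_pos by (intro AE_I2) (auto simp: abs_mult less_imp_le)
  qed
qed

lemma set0_space: "Q \<subseteq> V \<Longrightarrow> w \<in> space MM \<Longrightarrow> set0 Q w \<in> space MM"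
  unfolding space_MM set0_def by (auto simp: PiE_iff extensional_def)

lemma set0_meas: "Q \<subseteq> V \<Longrightarrow> set0 Q \<in> measurable MM MM"
proof -
  assume Q: "Q \<subseteq> V"
  have "(\<lambda>w j. if j \<in> Q then 0 else w j) \<in> measurable MM (PiM V (\<lambda>_. NN))"
  proof (rule measurable_PiM_single')
    fix i assume i: "i \<in> V"
    have "(\<lambda>w. w i) \<in> measurable MM NN"
      unfolding MM_eq using i by (rule measurable_component_singleton)
    then show "(\<lambda>w. if i \<in> Q then 0 else w i) \<in> measurable MM NN"
    proof (cases "i \<in> Q")
      case True
      have "(\<lambda>w. 0::real) \<in> measurable MM NN" by (rule measurable_const) simp
      then show ?thesis using True by simp
    next
      case False
      then show ?thesis using \<open>(\<lambda>w. w i) \<in> measurable MM NN\<close> by simp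
    qed
  next
    show "(\<lambda>w j. if j \<in> Q then 0 else w j) \<in> space MM \<rightarrow> (\<Pi>\<^sub>E i\<in>V. space NN)"
      using Q unfolding space_MM by (auto simp: PiE_iff extensional_def)
  qed
  then show ?thesis unfolding set0_def[abs_def] MM_eq .
qed

lemma Mf_set0: "Mf (set0 Q w) \<le> Mf w"
  unfolding Mf_def set0_def by (intro prod_mono) auto

lemma pb_set0: "Q \<subseteq> V \<Longrightarrow> pb h \<Longrightarrow> pb (\<lambda>w. h (set0 Q w))"
proof -
  assume Q: "Q \<subseteq> V" and b: "pb h"
  obtain C p where C: "C \<ge> 0" and hb: "\<And>w. w \<in> space MM \<Longrightarrow> \<bar>h w\<bar> \<le> C * Mf w ^ p"
    using b unfolding pb_def by blast
  { fix w assume w: "w \<in> space MM"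
    have "\<bar>h (set0 Q w)\<bar> \<le> C * Mf (set0 Q w) ^ p" using hb set0_space[OF Q w] .
    also have "\<dots> \<le> C * Mf w ^ p"
      using C Mf_set0 Mf_ge1 by (intro mult_left_mono power_mono) (auto intro: order_trans[OF zero_le_one])
    finally have "\<bar>h (set0 Q w)\<bar> \<le> C * Mf w ^ p" . }
  then show ?thesis using C unfolding pb_def by blast
qed

definition affsp :: "'v \<Rightarrow> (('v \<Rightarrow> real) \<Rightarrow> real) \<Rightarrow> bool" where
  "affsp m h \<longleftrightarrow> (\<forall>w\<in>space MM. \<forall>y. h (w(m:=y)) = h (w(m:=0)) + y * (h (w(m:=1)) - h (w(m:=0))))"

lemma set0_single: "set0 {m} w = w(m:=0)"
  unfolding set0_def by auto

lemma single_step: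
  assumes m: "m \<in> V" and hm: "h \<in> borel_measurable MM" and b: "pb h" and a: "affsp m h"
  shows "integral\<^sup>L MM h = integral\<^sup>L MM (\<lambda>w. h (w(m:=0)))"
proof -
  interpret PSF: product_sigma_finite "\<lambda>_::'v. NN" by (rule PSF)
  interpret N: prob_space NN by (rule N_prob)
  let ?I = "V - {m}"
  have pU: "measure NN UNIV = 1" using N.prob_space by simp
  have VI: "insert m ?I = V" using m by auto
  have fI: "finite ?I" "m \<notin> ?I" using finV by auto
  let ?g = "\<lambda>w. h (w(m:=0))"
  have gm: "?g \<in> borel_measurable MM"
    using measurable_comp[OF set0_meas hm, of "{m}"] m by (simp add: o_def set0_single)
  have gb: "pb ?g" using pb_set0[OF _ b, of "{m}"] m by (simp add: set0_single)
  have ih: "integrable MM h" by (rule pb_integrable[OF hm b])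
  have ig: "integrable MM ?g" by (rule pb_integrable[OF gm gb])
  have sp: "x(m:=y) \<in> space MM" if "x \<in> space (PiM ?I (\<lambda>_. NN))" for x y
    using that m unfolding space_MM by (auto simp: space_PiM PiE_iff extensional_def)
  have eq1: "integral\<^sup>L MM h = (\<integral>x. (\<integral>y. h (x(m:=y)) \<partial>NN) \<partial>PiM ?I (\<lambda>_. NN))"
  proof -
    have i': "integrable (PiM (insert m ?I) (\<lambda>_. NN)) h" unfolding VI using ih by (simp only: MM_eq)
    show ?thesis using PSF.product_integral_insert[OF fI i'] unfolding VI MM_eq[symmetric] .
  qed
  have eq2: "integral\<^sup>L MM ?g = (\<integral>x. (\<integral>y. ?g (x(m:=y)) \<partial>NN) \<partial>PiM ?I (\<lambda>_. NN))"
  proof -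
    have i': "integrable (PiM (insert m ?I) (\<lambda>_. NN)) ?g" unfolding VI using ig by (simp only: MM_eq)
    show ?thesis using PSF.product_integral_insert[OF fI i'] unfolding VI MM_eq[symmetric] .
  qed
  have inner: "(\<integral>y. h (x(m:=y)) \<partial>NN) = (\<integral>y. ?g (x(m:=y)) \<partial>NN)"
    if x: "x \<in> space (PiM ?I (\<lambda>_. NN))" for x
  proof -
    have pt: "h (x(m:=y)) = h (x(m:=0)) + y * (h (x(m:=1)) - h (x(m:=0)))" for y
    proof -
      have xs: "x(m:=y) \<in> space MM" by (rule sp[OF x])
      have "h ((x(m:=y))(m:=y)) = h ((x(m:=y))(m:=0)) + y * (h ((x(m:=y))(m:=1)) - h ((x(m:=y))(m:=0)))"
        using spec[OF bspec[OF a[unfolded affsp_def] xs], of y] .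
      then show ?thesis by (simp only: fun_upd_upd)
    qed
    have "(\<integral>y. h (x(m:=y)) \<partial>NN) = (\<integral>y. h (x(m:=0)) + y * (h (x(m:=1)) - h (x(m:=0))) \<partial>NN)"
      by (rule Bochner_Integration.integral_cong[OF refl pt])
    also have "\<dots> = h (x(m:=0)) + (\<integral>y. y * (h (x(m:=1)) - h (x(m:=0))) \<partial>NN)"
      using int_N_id by (subst Bochner_Integration.integral_add) (auto simp: pU)
    also have "(\<integral>y. y * (h (x(m:=1)) - h (x(m:=0))) \<partial>NN) = 0"
      using intg_N_id by simp
    finally have c1: "(\<integral>y. h (x(m:=y)) \<partial>NN) = h (x(m:=0))" by (simp only: add_0_right)
    have r: "(\<integral>y. h ((x(m:=y))(m:=0)) \<partial>NN) = h (x(m:=0))"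
      by (simp only: fun_upd_upd) (simp add: pU)
    show ?thesis by (simp only: c1 r)
  qed
  note eq1
  also have "(\<integral>x. (\<integral>y. h (x(m:=y)) \<partial>NN) \<partial>PiM ?I (\<lambda>_. NN)) = (\<integral>x. (\<integral>y. h ((x(m:=y))(m:=0)) \<partial>NN) \<partial>PiM ?I (\<lambda>_. NN))"
    by (rule Bochner_Integration.integral_cong, rule refl, rule inner)
  also note eq2[symmetric]
  finally show ?thesis .
qed


lemma set0_upd: "m \<notin> Q \<Longrightarrow> set0 Q (w(m:=y)) = (set0 Q w)(m:=y)"
  unfolding set0_def by auto

lemma set0_ins: "set0 Q (w(m:=0)) = set0 (insert m Q) w"
  unfolding set0_def by auto

lemma aff_set0:
  assumes Q: "Q \<subseteq> V" and mQ: "m \<notin> Q" and a: "affsp m h"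
  shows "affsp m (\<lambda>w. h (set0 Q w))"
  unfolding affsp_def
proof (intro ballI allI)
  fix w y assume w: "w \<in> space MM"
  have s: "set0 Q w \<in> space MM" by (rule set0_space[OF Q w])
  show "h (set0 Q (w(m:=y))) = h (set0 Q (w(m:=0))) + y * (h (set0 Q (w(m:=1))) - h (set0 Q (w(m:=0))))"
    unfolding set0_upd[OF mQ] using spec[OF bspec[OF a[unfolded affsp_def] s], of y] .
qed

lemma multi_step:
  assumes fQ: "finite Q" and Q: "Q \<subseteq> V" and hm: "h \<in> borel_measurable MM" and b: "pb h"
    and a: "\<forall>m\<in>Q. affsp m h"
  shows "integral\<^sup>L MM h = integral\<^sup>L MM (\<lambda>w. h (set0 Q w))"
  using fQ Q a
proof (induction Q rule: finite_induct)
  case empty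
  have "set0 {} w = w" for w :: "'v \<Rightarrow> real" unfolding set0_def by auto
  then show ?case by simp
next
  case (insert m Q)
  have Q: "Q \<subseteq> V" and m: "m \<in> V" using insert by auto
  have ih: "integral\<^sup>L MM h = integral\<^sup>L MM (\<lambda>w. h (set0 Q w))" using insert by auto
  let ?g = "\<lambda>w. h (set0 Q w)"
  have gm: "?g \<in> borel_measurable MM"
    using measurable_comp[OF set0_meas[OF Q] hm] by (simp add: o_def)
  have gb: "pb ?g" by (rule pb_set0[OF Q b])
  have ga: "affsp m ?g" using aff_set0[OF Q insert(2)] insert(5) by auto
  have "integral\<^sup>L MM ?g = integral\<^sup>L MM (\<lambda>w. ?g (w(m:=0)))"
    by (rule single_step[OF m gm gb ga])
  also have "\<dots> = integral\<^sup>L MM (\<lambda>w. h (set0 (insert m Q) w))"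
    by (simp only: set0_ins)
  finally show ?case using ih by simp
qed


definition GG :: "'v set \<Rightarrow> ('v \<Rightarrow> real) set set" where
  "GG B = {(\<lambda>w. w j) -` A \<inter> space MM | j A. j \<in> B \<and> A \<in> sets borel}"

lemma GG_pow: "GG B \<subseteq> Pow (space MM)" unfolding GG_def by auto

lemma gen_sets: "sets (gen_sigma MM B) = sigma_sets (space MM) (GG B)"
  unfolding gen_sigma_def GG_def[symmetric] by (rule sets_measure_of[OF GG_pow])

lemma gen_space: "space (gen_sigma MM B) = space MM"
  unfolding gen_sigma_def GG_def[symmetric] by (rule space_measure_of[OF GG_pow])

lemma comp_meas: "j \<in> V \<Longrightarrow> (\<lambda>w. w j) \<in> borel_measurable MM"
proof -
  assume j: "j \<in> V"
  have "(\<lambda>w. w j) \<in> measurable MM NN"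
    unfolding MM_eq using j by (rule measurable_component_singleton)
  then show ?thesis by (simp only: measurable_cong_sets[OF refl sets_density]) simp
qed

lemma GG_sets: "B \<subseteq> V \<Longrightarrow> GG B \<subseteq> sets MM"
proof
  fix X assume B: "B \<subseteq> V" and X: "X \<in> GG B"
  then obtain j A where X: "X = (\<lambda>w. w j) -` A \<inter> space MM" and j: "j \<in> B" and A: "A \<in> sets borel"
    unfolding GG_def by blast
  show "X \<in> sets MM" unfolding X using comp_meas[of j] j B A by (intro measurable_sets) auto
qed

lemma subalg_gen: "B \<subseteq> V \<Longrightarrow> subalgebra MM (gen_sigma MM B)"
  unfolding subalgebra_def gen_sets gen_space
  using sets.sigma_sets_subset[OF GG_sets] by auto

lemma gen_inv:
  assumes A: "A \<in> sigma_sets (space MM) (GG B)" and mB: "m \<notin> B" and m: "m \<in> V"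
  shows "\<forall>w\<in>space MM. \<forall>y. (w(m:=y) \<in> A) = (w \<in> A)"
  using A
proof (induction rule: sigma_sets.induct)
  case (Basic a)
  then obtain j S where a: "a = (\<lambda>w. w j) -` S \<inter> space MM" and j: "j \<in> B"
    unfolding GG_def by blast
  have jm: "j \<noteq> m" using j mB by auto
  show ?case unfolding a using jm m by (auto simp: space_MM PiE_iff extensional_def)
next
  case Empty
  then show ?case by simp
next
  case (Compl a)
  then show ?case using m by (auto simp: space_MM PiE_iff extensional_def)
next
  case (Union a)
  then show ?case by blast
qed

lemma cond_exp_zero:
  assumes B: "B \<subseteq> V" and gm: "g \<in> borel_measurable MM" and gb: "pb g"
    and ga: "\<forall>m\<in>V - B. affsp m g" and g0: "\<forall>w\<in>space MM. g (set0 (V - B) w) = 0"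
  shows "integrable MM g \<and> (AE w in MM. real_cond_exp MM (gen_sigma MM B) g w = 0)"
proof
  show ig: "integrable MM g" by (rule pb_integrable[OF gm gb])
  interpret P: prob_space MM by (rule MM_prob)
  interpret S: finite_measure_subalgebra MM "gen_sigma MM B"
    by unfold_locales (rule subalg_gen[OF B])
  show "AE w in MM. real_cond_exp MM (gen_sigma MM B) g w = 0"
  proof (rule S.real_cond_exp_charact)
    fix A assume A: "A \<in> sets (gen_sigma MM B)"
    then have As: "A \<in> sigma_sets (space MM) (GG B)" by (simp only: gen_sets)
    have AM: "A \<in> sets MM" using A subalg_gen[OF B] unfolding subalgebra_def by auto
    let ?h = "\<lambda>w. indicator A w * g w"
    have hm: "?h \<in> borel_measurable MM" using AM gm by measurable
    have hb: "pb ?h"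
    proof -
      obtain C p where C: "C \<ge> 0" and b: "\<And>w. w \<in> space MM \<Longrightarrow> \<bar>g w\<bar> \<le> C * Mf w ^ p"
        using gb unfolding pb_def by blast
      have "\<bar>?h w\<bar> \<le> C * Mf w ^ p" if "w \<in> space MM" for w
        using b[OF that] C Mf_pos[of w] by (auto simp: indicator_def abs_mult intro: order_trans[OF _ b[OF that]])
      then show ?thesis using C unfolding pb_def by blast
    qed
    have ha: "\<forall>m\<in>V - B. affsp m ?h"
    proof
      fix m assume m: "m \<in> V - B"
      have inv: "\<forall>w\<in>space MM. \<forall>y. (w(m:=y) \<in> A) = (w \<in> A)"
        using gen_inv[OF As] m by auto
      show "affsp m ?h" unfolding affsp_def
      proof (intro ballI allI)
        fix w y assume w: "w \<in> space MM"
        have e: "indicator A (w(m:=z)) = (indicator A w :: real)" for z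
          using inv w by (auto simp: indicator_def)
        have gy: "g (w(m:=y)) = g (w(m:=0)) + y * (g (w(m:=1)) - g (w(m:=0)))"
          using spec[OF bspec[OF ga[rule_format, OF m, unfolded affsp_def] w], of y] .
        show "?h (w(m:=y)) = ?h (w(m:=0)) + y * (?h (w(m:=1)) - ?h (w(m:=0)))"
          unfolding e gy by (simp add: algebra_simps)
      qed
    qed
    have fQ: "finite (V - B)" using finV by auto
    have "integral\<^sup>L MM ?h = integral\<^sup>L MM (\<lambda>w. ?h (set0 (V - B) w))"
      by (rule multi_step[OF fQ _ hm hb ha]) auto
    also have "\<dots> = 0"
      using g0 by (subst Bochner_Integration.integral_cong[OF refl, where g="\<lambda>_. 0"]) auto
    finally have "integral\<^sup>L MM ?h = 0" .
    then show "(\<integral>x\<in>A. g x \<partial>MM) = (\<integral>x\<in>A. 0 \<partial>MM)"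
      unfolding set_lebesgue_integral_def by simp
  qed (auto intro: ig)
qed

end



locale gr =
  fixes V :: "'v set" and E :: "'f set" and vtx :: "'f \<Rightarrow> nat \<Rightarrow> 'v" and r :: nat and i :: 'v
  assumes hyp: "hypergraph V E vtx r" and iV: "i \<in> V"
begin

definition inc :: "'f \<Rightarrow> 'v \<Rightarrow> bool" where
  "inc c v \<longleftrightarrow> c \<in> E \<and> v \<in> vtx c ` {..<r}"

definition sh :: "'v \<Rightarrow> 'v \<Rightarrow> bool" where
  "sh x y \<longleftrightarrow> (\<exists>c. inc c x \<and> inc c y)"

lemma sh_sym: "sh x y \<Longrightarrow> sh y x" unfolding sh_def by blast

lemma inc_V: "inc c v \<Longrightarrow> v \<in> V" using hyp unfolding inc_def hypergraph_def by auto

primrec Reach :: "'v \<Rightarrow> nat \<Rightarrow> 'v set" where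
  "Reach k 0 = {k}"
| "Reach k (Suc s) = Reach k s \<union> {z. \<exists>y\<in>Reach k s. sh y z}"

lemma R_self: "k \<in> Reach k s" by (induction s) auto

lemma R_mono: "s \<le> s' \<Longrightarrow> Reach k s \<subseteq> Reach k s'"
  by (induction s' ) (auto simp: le_Suc_eq)

lemma R_step: "y \<in> Reach k s \<Longrightarrow> sh y z \<Longrightarrow> z \<in> Reach k (Suc s)" by auto

lemma R_trans: "x \<in> Reach k s \<Longrightarrow> k \<in> Reach j n \<Longrightarrow> x \<in> Reach j (n + s)"
proof (induction s arbitrary: x)
  case 0 then show ?case by simp
next
  case (Suc s)
  have e: "n + Suc s = Suc (n + s)" by simp
  from Suc.prems(1) have "x \<in> Reach k s \<or> (\<exists>y\<in>Reach k s. sh y x)" by simp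
  then show ?case
  proof
    assume "x \<in> Reach k s"
    then show ?case unfolding e using Suc.IH Suc.prems(2) by simp
  next
    assume "\<exists>y\<in>Reach k s. sh y x"
    then obtain y where "y \<in> Reach k s" "sh y x" by blast
    then show ?case unfolding e using Suc.IH[of y] Suc.prems(2) by auto
  qed
qed

definition reach :: "'v \<Rightarrow> bool" where "reach x \<longleftrightarrow> (\<exists>t. x \<in> Reach i t)"

definition dep :: "'v \<Rightarrow> nat" where "dep x = (LEAST t. x \<in> Reach i t)"

lemma dep_in: "reach x \<Longrightarrow> x \<in> Reach i (dep x)"
  unfolding reach_def dep_def by (metis LeastI)

lemma dep_le: "x \<in> Reach i t \<Longrightarrow> dep x \<le> t"
  unfolding dep_def by (rule Least_le)

lemma reachI: "x \<in> Reach i t \<Longrightarrow> reach x" unfolding reach_def by blast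

lemma R_iff: "x \<in> Reach i t \<longleftrightarrow> reach x \<and> dep x \<le> t"
  using dep_in dep_le reachI R_mono by blast

lemma reach_i: "reach i" and dep_i: "dep i = 0"
  using R_iff[of i 0] by auto

lemma dep0: "reach x \<Longrightarrow> dep x = 0 \<Longrightarrow> x = i"
  using dep_in[of x] by auto

lemma sh_dep: "reach x \<Longrightarrow> sh x y \<Longrightarrow> reach y \<and> dep y \<le> Suc (dep x)"
  using R_step[OF dep_in] R_iff by blast

lemma sh_dep2: "reach x \<Longrightarrow> sh x y \<Longrightarrow> dep x \<le> Suc (dep y)"
  using sh_dep[of x y] sh_dep[of y x] sh_sym by blast

lemma parent_ex:
  assumes "reach x" "dep x = Suc D"
  shows "\<exists>c z. inc c z \<and> inc c x \<and> reach z \<and> dep z = D"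
proof -
  have "x \<in> Reach i (Suc D)" using dep_in[OF assms(1)] unfolding assms(2) .
  moreover have "x \<notin> Reach i D" using assms R_iff by auto
  ultimately obtain y where y: "y \<in> Reach i D" "sh y x" by auto
  then have "reach y" "dep y \<le> D" using R_iff by auto
  moreover have "dep y \<ge> D" using sh_dep[OF \<open>reach y\<close> y(2)] assms by auto
  ultimately show ?thesis using y(2) unfolding sh_def by auto
qed

lemma walk_Reach:
  "(\<forall>t<k. sh (p t) (p (Suc t))) \<Longrightarrow> p k \<in> Reach (p 0) k"
  by (induction k) auto

lemma Reach_walk:
  "x \<in> Reach k s \<Longrightarrow> \<exists>k'\<le>s. \<exists>p. p 0 = k \<and> p k' = x \<and> (\<forall>t<k'. sh (p t) (p (Suc t)))"
proof (induction s arbitrary: x)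
  case 0 then show ?case by (intro exI[of _ 0]) auto
next
  case (Suc s)
  show ?case
  proof (cases "x \<in> Reach k s")
    case True then show ?thesis using Suc.IH by (meson le_Suc_eq)
  next
    case False
    then obtain y where y: "y \<in> Reach k s" "sh y x" using Suc.prems by auto
    obtain k' p where kp: "k' \<le> s" "p 0 = k" "p k' = y" "\<forall>t<k'. sh (p t) (p (Suc t))"
      using Suc.IH[OF y(1)] by blast
    let ?q = "p(Suc k' := x)"
    show ?thesis
      using kp y(2) by (intro exI[of _ "Suc k'"] conjI exI[of _ ?q]) (auto simp: less_Suc_eq)
  qed
qed

lemma ball_eq: "ball_var V E vtx r i l = V \<inter> Reach i l"
proof (rule set_eqI, rule iffI)
  fix j assume "j \<in> ball_var V E vtx r i l"
  then obtain k p where j: "j \<in> V" "k \<le> l" "p 0 = i" "p k = j"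
    and w: "\<forall>t<k. p t \<in> V \<and> (\<exists>b\<in>E. p t \<in> vtx b ` {..<r} \<and> p (Suc t) \<in> vtx b ` {..<r})"
    unfolding ball_var_def by blast
  have "\<forall>t<k. sh (p t) (p (Suc t))" using w unfolding sh_def inc_def by blast
  then have "j \<in> Reach i k" using walk_Reach[of k p] j by simp
  then show "j \<in> V \<inter> Reach i l" using R_mono[OF j(2)] j(1) by auto
next
  fix j assume j: "j \<in> V \<inter> Reach i l"
  then obtain k p where kp: "k \<le> l" "p 0 = i" "p k = j" "\<forall>t<k. sh (p t) (p (Suc t))"
    using Reach_walk[of j i l] by blast
  have "\<forall>t<k. p t \<in> V \<and> (\<exists>b\<in>E. p t \<in> vtx b ` {..<r} \<and> p (Suc t) \<in> vtx b ` {..<r})"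
    using kp(4) inc_V unfolding sh_def inc_def by blast
  then show "j \<in> ball_var V E vtx r i l" unfolding ball_var_def using kp j by blast
qed


fun badj :: "('v + 'f) \<Rightarrow> ('v + 'f) \<Rightarrow> bool" where
  "badj (Inl v) (Inr c) = inc c v"
| "badj (Inr c) (Inl v) = inc c v"
| "badj (Inl v) (Inl w) = False"
| "badj (Inr c) (Inr d) = False"

lemma badj_sym: "badj a b \<Longrightarrow> badj b a"
  by (cases a; cases b) auto

lemma badj_isl: "badj a b \<Longrightarrow> isl a \<noteq> isl b"
  by (cases a; cases b) auto

lemma isl_Inl: "isl x \<Longrightarrow> x = Inl (projl x)" by (cases x) auto
lemma nisl_Inr: "\<not> isl x \<Longrightarrow> x = Inr (projr x)" by (cases x) auto

lemma closed_cyc: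
  assumes K: "2 \<le> K" and inj: "inj_on C {..<2*K}"
    and adj: "\<forall>q<2*K. badj (C q) (C (Suc q mod (2*K)))" and l0: "isl (C 0)"
  shows "fg_cycle E vtx r K"
proof -
  have par: "isl (C q) \<longleftrightarrow> even q" if "q < 2*K" for q
    using that
  proof (induction q)
    case 0 then show ?case using l0 by simp
  next
    case (Suc q)
    have "badj (C q) (C (Suc q mod (2*K)))" using adj Suc.prems Suc_lessD by blast
    moreover have "Suc q mod (2*K) = Suc q" using Suc.prems by simp
    ultimately have "isl (C q) \<noteq> isl (C (Suc q))" using badj_isl by metis
    then show ?case using Suc by auto
  qed
  define vs where "vs t = projl (C (2*t))" for t
  define fs where "fs t = projr (C (Suc (2*t)))" for t
  have Cv: "C (2*t) = Inl (vs t)" if "t < K" for t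
    unfolding vs_def using par[of "2*t"] that by (intro isl_Inl) auto
  have Cf: "C (Suc (2*t)) = Inr (fs t)" if "t < K" for t
    unfolding fs_def using par[of "Suc (2*t)"] that by (intro nisl_Inr) auto
  have i1: "inc (fs t) (vs t)" if "t < K" for t
  proof -
    have "badj (C (2*t)) (C (Suc (2*t) mod (2*K)))" by (rule adj[rule_format]) (use that in simp)
    moreover have "Suc (2*t) mod (2*K) = Suc (2*t)" using that by simp
    ultimately show ?thesis using Cv[OF that] Cf[OF that] by simp
  qed
  have i2: "inc (fs t) (vs (Suc t mod K))" if "t < K" for t
  proof -
    have "badj (C (Suc (2*t))) (C (Suc (Suc (2*t)) mod (2*K)))" by (rule adj[rule_format]) (use that in simp)
    moreover have "Suc (Suc (2*t)) mod (2*K) = 2 * (Suc t mod K)"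
      by (metis mult_Suc_right mod_mult_mult1 add_2_eq_Suc' add.commute)
    moreover have "Suc t mod K < K" using K by simp
    ultimately show ?thesis using Cv[of "Suc t mod K"] Cf[OF that] by simp
  qed
  have injv: "inj_on vs {..<K}"
  proof (rule inj_onI)
    fix a b assume a: "a \<in> {..<K}" and b: "b \<in> {..<K}" and e: "vs a = vs b"
    have "C (2*a) = C (2*b)" using Cv[of a] Cv[of b] a b e by simp
    moreover have "2*a \<in> {..<2*K}" "2*b \<in> {..<2*K}" using a b by auto
    ultimately have "2*a = 2*b" using inj_onD[OF inj] by blast
    then show "a = b" by simp
  qed
  have injf: "inj_on fs {..<K}"
  proof (rule inj_onI)
    fix a b assume a: "a \<in> {..<K}" and b: "b \<in> {..<K}" and e: "fs a = fs b"
    have "C (Suc (2*a)) = C (Suc (2*b))" using Cf[of a] Cf[of b] a b e by simp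
    moreover have "Suc (2*a) \<in> {..<2*K}" "Suc (2*b) \<in> {..<2*K}" using a b by auto
    ultimately have "Suc (2*a) = Suc (2*b)" using inj_onD[OF inj] by blast
    then show "a = b" by simp
  qed
  have main: "\<forall>t<K. fs t \<in> E \<and> vs t \<in> vtx (fs t) ` {..<r} \<and> vs ((t + 1) mod K) \<in> vtx (fs t) ` {..<r}"
  proof (intro allI impI)
    fix t assume t: "t < K"
    show "fs t \<in> E \<and> vs t \<in> vtx (fs t) ` {..<r} \<and> vs ((t + 1) mod K) \<in> vtx (fs t) ` {..<r}"
      using i1[OF t] i2[OF t] unfolding inc_def by simp
  qed
  show ?thesis unfolding fg_cycle_def
    by (intro conjI K exI[of _ vs] exI[of _ fs] injv injf main)
qed

lemma rot_cyc:
  assumes K: "2 \<le> K" and inj: "inj_on C {..<2*K}"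
    and adj: "\<forall>q<2*K. badj (C q) (C (Suc q mod (2*K)))" and l0: "\<not> isl (C 0)"
  shows "fg_cycle E vtx r K"
proof -
  define C' where "C' q = C (Suc q mod (2*K))" for q
  have inj': "inj_on C' {..<2*K}"
  proof (rule inj_onI)
    fix a b assume a: "a \<in> {..<2*K}" and b: "b \<in> {..<2*K}" and e: "C' a = C' b"
    have "Suc a mod (2*K) \<in> {..<2*K}" "Suc b mod (2*K) \<in> {..<2*K}" using K by auto
    then have "Suc a mod (2*K) = Suc b mod (2*K)"
      using e inj_onD[OF inj] unfolding C'_def by blast
    then show "a = b" using a b by (auto simp: mod_Suc split: if_splits)
  qed
  have adj': "\<forall>q<2*K. badj (C' q) (C' (Suc q mod (2*K)))"
  proof (intro allI impI)
    fix q assume q: "q < 2*K"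
    have "Suc q mod (2*K) < 2*K" using K by simp
    then have "badj (C (Suc q mod (2*K))) (C (Suc (Suc q mod (2*K)) mod (2*K)))" by (rule adj[rule_format])
    moreover have "Suc (Suc q mod (2*K)) mod (2*K) = Suc (Suc q mod (2*K)) mod (2*K)" by simp
    ultimately show "badj (C' q) (C' (Suc q mod (2*K)))" unfolding C'_def by (simp add: mod_Suc_eq)
  qed
  have "isl (C' 0)"
  proof -
    have "badj (C 0) (C (Suc 0 mod (2*K)))" by (rule adj[rule_format]) (use K in simp)
    then show ?thesis using l0 badj_isl unfolding C'_def by fastforce
  qed
  then show ?thesis by (rule closed_cyc[OF K inj' adj'])
qed

lemma two_chains:
  fixes X Y :: "nat \<Rightarrow> 'v + 'f" and lam :: "'v + 'f \<Rightarrow> nat"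
  assumes X0: "X 0 = Y 0" and XN: "X N = Y N" and X1: "X 1 \<noteq> Y 1" and N1: "1 \<le> N"
    and ax: "\<forall>p<N. badj (X p) (X (Suc p))" and ay: "\<forall>p<N. badj (Y p) (Y (Suc p))"
    and lx: "\<forall>p\<le>N. lam (X p) = c - p" and ly: "\<forall>p\<le>N. lam (Y p) = c - p" and cN: "N \<le> c"
  shows "\<exists>K. 2 \<le> K \<and> K \<le> N \<and> fg_cycle E vtx r K"
proof -
  have ixx: "p = q" if "p \<le> N" "q \<le> N" "X p = X q" for p q
    using lx that cN by (metis diff_diff_cancel le_trans)
  have ixy: "p = q" if "p \<le> N" "q \<le> N" "X p = Y q" for p q
    using lx ly that cN by (metis diff_diff_cancel le_trans)
  have iyy: "p = q" if "p \<le> N" "q \<le> N" "Y p = Y q" for p q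
    using ly that cN by (metis diff_diff_cancel le_trans)
  define p0 where "p0 = (LEAST p. 1 \<le> p \<and> X p = Y p)"
  have ex: "1 \<le> N \<and> X N = Y N" using N1 XN by simp
  have p0a: "1 \<le> p0 \<and> X p0 = Y p0" unfolding p0_def by (rule LeastI[where P="\<lambda>p. 1 \<le> p \<and> X p = Y p", OF ex])
  have p0N: "p0 \<le> N" unfolding p0_def by (rule Least_le[where P="\<lambda>p. 1 \<le> p \<and> X p = Y p", OF ex])
  have p0m: "X p \<noteq> Y p" if "1 \<le> p" "p < p0" for p
    using not_less_Least[of p "\<lambda>p. 1 \<le> p \<and> X p = Y p"] that unfolding p0_def by auto
  have p02: "2 \<le> p0" using p0a X1 by (cases "p0 = 1") auto
  define C where "C q = (if q \<le> p0 then X q else Y (2*p0 - q))" for q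
  have injC: "inj_on C {..<2*p0}"
  proof (rule inj_onI)
    fix a b assume a: "a \<in> {..<2*p0}" and b: "b \<in> {..<2*p0}" and e: "C a = C b"
    show "a = b"
    proof (cases "a \<le> p0"; cases "b \<le> p0")
      assume "a \<le> p0" "b \<le> p0"
      then show ?thesis using e ixx p0N unfolding C_def by auto
    next
      assume "\<not> a \<le> p0" "\<not> b \<le> p0"
      then have "2*p0 - a = 2*p0 - b" using e iyy p0N a b unfolding C_def by auto
      then show ?thesis using a b by auto
    next
      assume ab: "a \<le> p0" "\<not> b \<le> p0"
      then have "X a = Y (2*p0 - b)" using e unfolding C_def by auto
      moreover have "2*p0 - b \<le> N" "1 \<le> 2*p0 - b" "2*p0 - b < p0" using ab b p0N by auto
      ultimately have e1: "a = 2*p0 - b" using ixy[of a "2*p0 - b"] ab p0N by auto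
      then have "X (2*p0 - b) = Y (2*p0 - b)" using \<open>X a = Y (2*p0 - b)\<close> by simp
      then show ?thesis using p0m \<open>1 \<le> 2*p0 - b\<close> \<open>2*p0 - b < p0\<close> by blast
    next
      assume ab: "\<not> a \<le> p0" "b \<le> p0"
      then have "X b = Y (2*p0 - a)" using e unfolding C_def by auto
      moreover have "2*p0 - a \<le> N" "1 \<le> 2*p0 - a" "2*p0 - a < p0" using ab a p0N by auto
      ultimately have e1: "b = 2*p0 - a" using ixy[of b "2*p0 - a"] ab p0N by auto
      then have "X (2*p0 - a) = Y (2*p0 - a)" using \<open>X b = Y (2*p0 - a)\<close> by simp
      then show ?thesis using p0m \<open>1 \<le> 2*p0 - a\<close> \<open>2*p0 - a < p0\<close> by blast
    qed
  qed
  have adjC: "\<forall>q<2*p0. badj (C q) (C (Suc q mod (2*p0)))"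
  proof (intro allI impI)
    fix q assume q: "q < 2*p0"
    consider "q < p0" | "q = p0" | "p0 < q" "Suc q < 2*p0" | "Suc q = 2*p0" using q by linarith
    then show "badj (C q) (C (Suc q mod (2*p0)))"
    proof cases
      case 1
      have "badj (X q) (X (Suc q))" by (rule ax[rule_format]) (use 1 p0N in simp)
      then show ?thesis using 1 p02 unfolding C_def by auto
    next
      case 2
      have "badj (Y (p0 - 1)) (Y (Suc (p0 - 1)))" by (rule ay[rule_format]) (use p0N p02 in simp)
      then have "badj (Y p0) (Y (p0 - 1))" using p02 badj_sym by (simp add: Suc_diff_1)
      moreover have "Suc q mod (2*p0) = Suc p0" using 2 p02 by simp
      ultimately show ?thesis using 2 p0a unfolding C_def by (auto simp: numeral_2_eq_2)
    next
      case 3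
      have "badj (Y (2*p0 - Suc q)) (Y (Suc (2*p0 - Suc q)))" by (rule ay[rule_format]) (use 3 p0N in simp)
      moreover have "Suc (2*p0 - Suc q) = 2*p0 - q" using 3 by auto
      ultimately have "badj (Y (2*p0 - q)) (Y (2*p0 - Suc q))" using badj_sym by auto
      then show ?thesis using 3 unfolding C_def by auto
    next
      case 4
      have "badj (Y 0) (Y (Suc 0))" by (rule ay[rule_format]) (use N1 in simp)
      then have "badj (Y 1) (X 0)" using X0 badj_sym by auto
      moreover have "2*p0 - q = 1" using 4 by auto
      ultimately show ?thesis using 4 p02 unfolding C_def by auto
    qed
  qed
  have "fg_cycle E vtx r p0"
  proof (cases "isl (C 0)")
    case True then show ?thesis by (rule closed_cyc[OF p02 injC adjC])
  next
    case False then show ?thesis by (rule rot_cyc[OF p02 injC adjC])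
  qed
  then show ?thesis using p02 p0N by blast
qed

end

locale grg = gr V E vtx r i
  for V :: "'v set" and E :: "'f set" and vtx :: "'f \<Rightarrow> nat \<Rightarrow> 'v" and r :: nat and i :: 'v +
  fixes Lg :: nat
  assumes girth: "girth_ge E vtx r (4 * Lg + 4)" and r2: "2 \<le> r"
begin

lemma no_cycle: "K \<le> 2 * Lg + 1 \<Longrightarrow> \<not> fg_cycle E vtx r K"
  using girth unfolding girth_ge_def by auto

definition pinfo :: "'v \<Rightarrow> 'f \<times> 'v" where
  "pinfo v = (SOME cz. inc (fst cz) (snd cz) \<and> inc (fst cz) v \<and> reach (snd cz) \<and> dep (snd cz) = dep v - 1)"

definition "pf v = fst (pinfo v)"
definition "pv v = snd (pinfo v)"

lemma pinfo: assumes "reach v" "1 \<le> dep v"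
  shows "inc (pf v) (pv v) \<and> inc (pf v) v \<and> reach (pv v) \<and> dep (pv v) = dep v - 1"
proof -
  obtain D where D: "dep v = Suc D" using assms(2) by (cases "dep v") auto
  obtain c z where "inc c z \<and> inc c v \<and> reach z \<and> dep z = D" using parent_ex[OF assms(1) D] by blast
  then have "\<exists>cz. inc (fst cz) (snd cz) \<and> inc (fst cz) v \<and> reach (snd cz) \<and> dep (snd cz) = dep v - 1"
    using D by (intro exI[of _ "(c,z)"]) auto
  from someI_ex[OF this] show ?thesis unfolding pf_def pv_def pinfo_def .
qed

primrec anc :: "'v \<Rightarrow> nat \<Rightarrow> 'v" where
  "anc v 0 = v"
| "anc v (Suc q) = pv (anc v q)"

lemma anc: "reach v \<Longrightarrow> q \<le> dep v \<Longrightarrow> reach (anc v q) \<and> dep (anc v q) = dep v - q"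
proof (induction q)
  case 0 then show ?case by simp
next
  case (Suc q)
  then have h: "reach (anc v q)" "dep (anc v q) = dep v - q" by auto
  have "1 \<le> dep (anc v q)" using h Suc.prems by auto
  then show ?case using pinfo[OF h(1)] h by auto
qed

definition ch :: "'v \<Rightarrow> nat \<Rightarrow> 'v + 'f" where
  "ch v p = (if even p then Inl (anc v (p div 2)) else Inr (pf (anc v (p div 2))))"

definition fmin :: "'f \<Rightarrow> nat" where
  "fmin c = Min (dep ` vtx c ` {..<r})"

fun lam :: "'v + 'f \<Rightarrow> nat" where
  "lam (Inl v) = 2 * dep v"
| "lam (Inr c) = 2 * fmin c + 1"

lemma fmin_char:
  assumes c: "c \<in> E" and lo: "\<And>w. inc c w \<Longrightarrow> n \<le> dep w" and z: "inc c z" "dep z = n"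
  shows "fmin c = n"
  unfolding fmin_def
proof (rule Min_eqI)
  show "finite (dep ` vtx c ` {..<r})" by simp
  show "n \<le> y" if "y \<in> dep ` vtx c ` {..<r}" for y using that lo c unfolding inc_def by auto
  show "n \<in> dep ` vtx c ` {..<r}" using z unfolding inc_def by auto
qed

lemma fmin_adj:
  assumes "inc c x" "reach x" "1 \<le> dep x" "inc c y" "dep y = dep x - 1"
  shows "fmin c = dep x - 1"
proof (rule fmin_char)
  show "c \<in> E" using assms unfolding inc_def by auto
  show "dep x - 1 \<le> dep w" if "inc c w" for w
  proof -
    have "sh x w" using assms(1) that unfolding sh_def by blast
    then show ?thesis using sh_dep2[OF assms(2)] by force
  qed
qed (use assms in auto)

lemma lam_pf: "reach v \<Longrightarrow> 1 \<le> dep v \<Longrightarrow> lam (Inr (pf v)) = 2 * (dep v - 1) + 1"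
  using pinfo[of v] fmin_adj[of "pf v" v "pv v"] by auto

lemma ch_lam: assumes "reach v" "p \<le> 2 * dep v" shows "lam (ch v p) = 2 * dep v - p"
proof (cases "even p")
  case True
  then obtain q where q: "p = 2*q" by auto
  then show ?thesis using anc[OF assms(1), of q] assms True unfolding ch_def by auto
next
  case False
  then obtain q where q: "p = 2*q + 1" using oddE by blast
  have a: "reach (anc v q)" "dep (anc v q) = dep v - q" using anc[OF assms(1), of q] q assms by auto
  have "1 \<le> dep (anc v q)" using a q assms by auto
  then show ?thesis using lam_pf[OF a(1)] a q False unfolding ch_def by auto
qed

lemma ch_adj: assumes "reach v" "p < 2 * dep v" shows "badj (ch v p) (ch v (Suc p))"
proof (cases "even p")
  case True
  then obtain q where q: "p = 2*q" by auto
  have a: "reach (anc v q)" "dep (anc v q) = dep v - q" using anc[OF assms(1), of q] q assms by auto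
  have "1 \<le> dep (anc v q)" using a q assms by auto
  then show ?thesis using pinfo[OF a(1)] q unfolding ch_def by auto
next
  case False
  then obtain q where q: "p = 2*q + 1" using oddE by blast
  have a: "reach (anc v q)" "dep (anc v q) = dep v - q" using anc[OF assms(1), of q] q assms by auto
  have "1 \<le> dep (anc v q)" using a q assms by auto
  moreover have "Suc p div 2 = Suc q" "p div 2 = q" using q by auto
  ultimately show ?thesis using pinfo[OF a(1)] q unfolding ch_def by auto
qed

lemma ch_end: "reach v \<Longrightarrow> ch v (2 * dep v) = Inl i"
  using anc[of v "dep v"] dep0 unfolding ch_def by auto

lemma UPF:
  assumes x: "reach x" "dep x = D" "1 \<le> D" "D \<le> Lg"
    and c: "inc c1 x" "inc c2 x" "inc c1 y1" "inc c2 y2" "dep y1 = D - 1" "dep y2 = D - 1"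
  shows "c1 = c2"
proof (rule ccontr)
  assume ne: "c1 \<noteq> c2"
  have ry: "reach y1" "reach y2" using sh_dep[OF x(1)] c unfolding sh_def by blast+
  define X where "X p = (if p = 0 then Inl x else if p = 1 then Inr c1 else ch y1 (p - 2))" for p
  define Y where "Y p = (if p = 0 then Inl x else if p = 1 then Inr c2 else ch y2 (p - 2))" for p
  have f1: "fmin c1 = D - 1" using fmin_adj[OF c(1) x(1)] x c by auto
  have f2: "fmin c2 = D - 1" using fmin_adj[OF c(2) x(1)] x c by auto
  have "\<exists>K. 2 \<le> K \<and> K \<le> 2*D \<and> fg_cycle E vtx r K"
  proof (rule two_chains[where lam=lam and c="2*D"])
    show "X 0 = Y 0" unfolding X_def Y_def by simp
    show "X (2*D) = Y (2*D)" unfolding X_def Y_def using ch_end[OF ry(1)] ch_end[OF ry(2)] x c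
      by (auto simp: numeral_2_eq_2)
    show "X 1 \<noteq> Y 1" unfolding X_def Y_def using ne by simp
    show "1 \<le> 2*D" using x by simp
    show "\<forall>p<2*D. badj (X p) (X (Suc p))"
    proof (intro allI impI)
      fix p assume p: "p < 2*D"
      consider "p = 0" | "p = 1" | "2 \<le> p" by linarith
      then show "badj (X p) (X (Suc p))"
      proof cases
        case 1 then show ?thesis unfolding X_def using c by simp
      next
        case 2 then show ?thesis unfolding X_def ch_def using c by simp
      next
        case 3
        obtain q where q: "p = q + 2" using 3 le_Suc_ex[of 2 p] by (auto simp: add.commute)
        have "badj (ch y1 q) (ch y1 (Suc q))" using ch_adj[OF ry(1), of q] p q c x by auto
        then show ?thesis unfolding X_def q by simp
      qed
    qed
    show "\<forall>p<2*D. badj (Y p) (Y (Suc p))"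
    proof (intro allI impI)
      fix p assume p: "p < 2*D"
      consider "p = 0" | "p = 1" | "2 \<le> p" by linarith
      then show "badj (Y p) (Y (Suc p))"
      proof cases
        case 1 then show ?thesis unfolding Y_def using c by simp
      next
        case 2 then show ?thesis unfolding Y_def ch_def using c by simp
      next
        case 3
        obtain q where q: "p = q + 2" using 3 le_Suc_ex[of 2 p] by (auto simp: add.commute)
        have "badj (ch y2 q) (ch y2 (Suc q))" using ch_adj[OF ry(2), of q] p q c x by auto
        then show ?thesis unfolding Y_def q by simp
      qed
    qed
    show "\<forall>p\<le>2*D. lam (X p) = 2*D - p"
      unfolding X_def using x f1 ch_lam[OF ry(1)] c by auto
    show "\<forall>p\<le>2*D. lam (Y p) = 2*D - p"
      unfolding Y_def using x f2 ch_lam[OF ry(2)] c by auto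
  qed simp
  then show False using no_cycle x by force
qed

lemma F5:
  assumes c: "inc c y1" "inc c y2" "y1 \<noteq> y2" "reach y1" "dep y1 = n" "dep y2 = n"
    and lo: "\<And>w. inc c w \<Longrightarrow> n \<le> dep w" and n: "n \<le> Lg"
  shows False
proof -
  have ry2: "reach y2" using sh_dep[OF c(4)] c unfolding sh_def by blast
  have cE: "c \<in> E" using c unfolding inc_def by auto
  have fm: "fmin c = n" by (rule fmin_char[OF cE lo c(1) c(5)])
  define X where "X p = (if p = 0 then Inr c else ch y1 (p - 1))" for p
  define Y where "Y p = (if p = 0 then Inr c else ch y2 (p - 1))" for p
  have "\<exists>K. 2 \<le> K \<and> K \<le> 2*n+1 \<and> fg_cycle E vtx r K"
  proof (rule two_chains[where lam=lam and c="2*n+1"])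
    show "X 0 = Y 0" unfolding X_def Y_def by simp
    show "X (2*n+1) = Y (2*n+1)" unfolding X_def Y_def using ch_end[OF c(4)] ch_end[OF ry2] c by auto
    show "X 1 \<noteq> Y 1" unfolding X_def Y_def ch_def using c by simp
    show "\<forall>p<2*n+1. badj (X p) (X (Suc p))"
    proof (intro allI impI)
      fix p assume p: "p < 2*n+1"
      show "badj (X p) (X (Suc p))"
      proof (cases "p = 0")
        case True then show ?thesis unfolding X_def ch_def using c by simp
      next
        case False
        obtain q where q: "p = Suc q" using False by (cases p) auto
        have "badj (ch y1 q) (ch y1 (Suc q))" using ch_adj[OF c(4), of q] p q c by auto
        then show ?thesis unfolding X_def q by simp
      qed
    qed
    show "\<forall>p<2*n+1. badj (Y p) (Y (Suc p))"
    proof (intro allI impI)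
      fix p assume p: "p < 2*n+1"
      show "badj (Y p) (Y (Suc p))"
      proof (cases "p = 0")
        case True then show ?thesis unfolding Y_def ch_def using c by simp
      next
        case False
        obtain q where q: "p = Suc q" using False by (cases p) auto
        have "badj (ch y2 q) (ch y2 (Suc q))" using ch_adj[OF ry2, of q] p q c by auto
        then show ?thesis unfolding Y_def q by simp
      qed
    qed
    show "\<forall>p\<le>2*n+1. lam (X p) = 2*n+1 - p"
      unfolding X_def using fm ch_lam[OF c(4)] c by auto
    show "\<forall>p\<le>2*n+1. lam (Y p) = 2*n+1 - p"
      unfolding Y_def using fm ch_lam[OF ry2] c by auto
  qed simp_all
  then show False using no_cycle n by force
qed

lemma UPV:
  assumes x: "reach x" "dep x = D" "1 \<le> D" "D \<le> Lg"
    and y: "sh y1 x" "sh y2 x" "dep y1 = D - 1" "dep y2 = D - 1"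
  shows "y1 = y2"
proof -
  obtain c1 where c1: "inc c1 y1" "inc c1 x" using y unfolding sh_def by blast
  obtain c2 where c2: "inc c2 y2" "inc c2 x" using y unfolding sh_def by blast
  have "c1 = c2" by (rule UPF[OF x c1(2) c2(2) c1(1) c2(1) y(3,4)])
  show ?thesis
  proof (rule ccontr)
    assume ne: "y1 \<noteq> y2"
    have ry1: "reach y1" using sh_dep[OF x(1)] c1 unfolding sh_def by blast
    have lo: "D - 1 \<le> dep w" if "inc c1 w" for w
    proof -
      have "sh x w" using c1(2) that unfolding sh_def by blast
      then show ?thesis using sh_dep2[OF x(1)] x by force
    qed
    show False
      by (rule F5[OF c1(1) _ ne ry1 y(3) y(4) lo]) (use c2 \<open>c1 = c2\<close> x in auto)
  qed
qed

lemma child: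
  assumes k: "reach k" "dep k = n" "1 \<le> n" "n \<le> Lg"
    and c: "inc c k" "inc c z" "dep z = n - 1"
    and c': "inc c' k" "c' \<noteq> c" "inc c' k'" "k' \<noteq> k"
  shows "dep k' = Suc n"
proof -
  have sk: "sh k k'" using c' unfolding sh_def by blast
  have rk': "reach k'" and up: "dep k' \<le> Suc n" using sh_dep[OF k(1) sk] k by auto
  have lo: "n \<le> Suc (dep k')" using sh_dep2[OF k(1) sk] k by auto
  have nz: "\<not> (\<exists>z'. inc c' z' \<and> dep z' = n - 1)"
  proof
    assume "\<exists>z'. inc c' z' \<and> dep z' = n - 1"
    then obtain z' where "inc c' z'" "dep z' = n - 1" by blast
    then have "c = c'" using UPF[OF k c(1) c'(1) c(2)] c by auto
    then show False using c' by simp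
  qed
  have "dep k' \<noteq> n - 1" using nz c' by auto
  moreover have "dep k' \<noteq> n"
  proof
    assume e: "dep k' = n"
    have low: "n \<le> dep w" if "inc c' w" for w
    proof -
      have "sh k w" using c'(1) that unfolding sh_def by blast
      then have "n \<le> Suc (dep w)" using sh_dep2[OF k(1)] k by force
      moreover have "dep w \<noteq> n - 1" using nz that by auto
      ultimately show ?thesis by linarith
    qed
    show False by (rule F5[OF c'(1) c'(3) c'(4)[symmetric] k(1) k(2) e low k(4)])
  qed
  ultimately show ?thesis using up lo by linarith
qed

lemma child_root:
  assumes "inc c' i" "inc c' k'" "k' \<noteq> i"
  shows "reach k' \<and> dep k' = 1"
proof -
  have sk: "sh i k'" using assms unfolding sh_def by blast
  have "reach k'" "dep k' \<le> 1" using sh_dep[OF reach_i sk] dep_i by auto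
  moreover have "dep k' \<noteq> 0" using dep0[of k'] assms(3) \<open>reach k'\<close> by auto
  ultimately show ?thesis by auto
qed

lemma anc_uniq:
  assumes "reach k1" "reach k2" "dep k1 = D" "dep k2 = D" "D + s \<le> Lg"
    "m \<in> Reach k1 s" "m \<in> Reach k2 s" "D + s \<le> dep m"
  shows "k1 = k2"
  using assms
proof (induction s arbitrary: m)
  case 0 then show ?case by simp
next
  case (Suc s)
  have k1i: "k1 \<in> Reach i D" and k2i: "k2 \<in> Reach i D" using Suc.prems R_iff by auto
  have nm1: "m \<notin> Reach k1 s"
  proof
    assume "m \<in> Reach k1 s"
    then have "m \<in> Reach i (D + s)" using R_trans[OF _ k1i] by blast
    then show False using Suc.prems R_iff by auto
  qed
  have nm2: "m \<notin> Reach k2 s"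
  proof
    assume "m \<in> Reach k2 s"
    then have "m \<in> Reach i (D + s)" using R_trans[OF _ k2i] by blast
    then show False using Suc.prems R_iff by auto
  qed
  obtain y1 where y1: "y1 \<in> Reach k1 s" "sh y1 m" using Suc.prems(6) nm1 by auto
  obtain y2 where y2: "y2 \<in> Reach k2 s" "sh y2 m" using Suc.prems(7) nm2 by auto
  have y1i: "y1 \<in> Reach i (D + s)" using R_trans[OF y1(1) k1i] .
  have y2i: "y2 \<in> Reach i (D + s)" using R_trans[OF y2(1) k2i] .
  have ry: "reach y1" "reach y2" "dep y1 \<le> D + s" "dep y2 \<le> D + s" using y1i y2i R_iff by auto
  have dm1: "dep m \<le> Suc (dep y1)" "dep m \<le> Suc (dep y2)" using sh_dep[OF ry(1) y1(2)] sh_dep[OF ry(2) y2(2)] by auto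
  have rm: "reach m" using sh_dep[OF ry(1) y1(2)] by auto
  have dm: "dep m = Suc (D + s)" using dm1 ry Suc.prems by linarith
  have dy: "dep y1 = D + s" "dep y2 = D + s" using dm dm1 ry by linarith+
  have "y1 = y2" by (rule UPV[OF rm dm _ _ y1(2) y2(2)]) (use dy Suc.prems in auto)
  then show ?case using Suc.IH[of y1] Suc.prems y1 y2 dy by auto
qed

end


definition indep :: "'v \<Rightarrow> (('v \<Rightarrow> real) \<Rightarrow> 'b) \<Rightarrow> bool" where
  "indep m h \<longleftrightarrow> (\<forall>w y. h (w(m:=y)) = h w)"

definition affn :: "'v \<Rightarrow> (('v \<Rightarrow> real) \<Rightarrow> real) \<Rightarrow> bool" where
  "affn m h \<longleftrightarrow> (\<forall>w y. h (w(m:=y)) = h (w(m:=0)) + y * (h (w(m:=1)) - h (w(m:=0))))"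

lemma indepD: "indep m h \<Longrightarrow> h (w(m:=y)) = h w" unfolding indep_def by blast

lemma indep_affn: "indep m h \<Longrightarrow> affn m h"
  unfolding indep_def affn_def by (metis fun_upd_triv fun_upd_upd add.right_neutral diff_self mult_zero_right)

lemma indep_const: "indep m (\<lambda>w. c)" unfolding indep_def by simp

lemma indep_comp: "m \<noteq> j \<Longrightarrow> indep m (\<lambda>w. w j)" unfolding indep_def by simp

lemma affn_comp: "affn m (\<lambda>w. w j)" unfolding affn_def by auto

lemma indep_add: "indep m g \<Longrightarrow> indep m h \<Longrightarrow> indep m (\<lambda>w. g w + h w)"
  unfolding indep_def by simp
lemma indep_diff: "indep m g \<Longrightarrow> indep m h \<Longrightarrow> indep m (\<lambda>w. g w - h w)"
  unfolding indep_def by simp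
lemma indep_mult: "indep m g \<Longrightarrow> indep m h \<Longrightarrow> indep m (\<lambda>w. (g w :: real) * h w)"
  unfolding indep_def by simp
lemma indep_fun: "indep m g \<Longrightarrow> indep m (\<lambda>w. F (g w))"
  unfolding indep_def by simp

lemma indep_sum: "(\<And>x. x \<in> T \<Longrightarrow> indep m (g x)) \<Longrightarrow> indep m (\<lambda>w. \<Sum>x\<in>T. (g x w :: real))"
  unfolding indep_def by simp
lemma indep_prod: "(\<And>x. x \<in> T \<Longrightarrow> indep m (g x)) \<Longrightarrow> indep m (\<lambda>w. \<Prod>x\<in>T. (g x w :: real))"
  unfolding indep_def by simp

lemma indep_restrict: "(\<And>t. t \<in> I \<Longrightarrow> indep m (g t)) \<Longrightarrow> indep m (\<lambda>w. restrict (\<lambda>t. g t w) I)"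
  unfolding indep_def by (auto intro!: restrict_ext)

lemma affnD: "affn m g \<Longrightarrow> g (w(m:=y)) = g (w(m:=0)) + y * (g (w(m:=1)) - g (w(m:=0)))"
  unfolding affn_def by blast

lemma affn_add: assumes "affn m g" "affn m h" shows "affn m (\<lambda>w. g w + h w)"
  unfolding affn_def
proof (intro allI)
  fix w y
  show "g (w(m:=y)) + h (w(m:=y)) = g (w(m:=0)) + h (w(m:=0)) + y * (g (w(m:=1)) + h (w(m:=1)) - (g (w(m:=0)) + h (w(m:=0))))"
    unfolding affnD[OF assms(1), of w y] affnD[OF assms(2), of w y] by (simp add: algebra_simps)
qed
lemma affn_diff: assumes "affn m g" "affn m h" shows "affn m (\<lambda>w. g w - h w)"
  unfolding affn_def
proof (intro allI)
  fix w y
  show "g (w(m:=y)) - h (w(m:=y)) = g (w(m:=0)) - h (w(m:=0)) + y * (g (w(m:=1)) - h (w(m:=1)) - (g (w(m:=0)) - h (w(m:=0))))"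
    unfolding affnD[OF assms(1), of w y] affnD[OF assms(2), of w y] by (simp add: algebra_simps)
qed
lemma affn_cmult: assumes "affn m h" shows "affn m (\<lambda>w. c * h w)"
  unfolding affn_def
proof (intro allI)
  fix w y
  show "c * h (w(m:=y)) = c * h (w(m:=0)) + y * (c * h (w(m:=1)) - c * h (w(m:=0)))"
    unfolding affnD[OF assms(1), of w y] by (simp add: algebra_simps)
qed
lemma affn_mult_indep: "indep m g \<Longrightarrow> affn m h \<Longrightarrow> affn m (\<lambda>w. g w * h w)"
proof -
  assume g: "indep m g" and h: "affn m h"
  show ?thesis unfolding affn_def
  proof (intro allI)
    fix w y
    have e: "g (w(m:=z)) = g w" for z using indepD[OF g] .
    show "g (w(m:=y)) * h (w(m:=y)) = g (w(m:=0)) * h (w(m:=0)) + y * (g (w(m:=1)) * h (w(m:=1)) - g (w(m:=0)) * h (w(m:=0)))"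
      unfolding e affnD[OF h, of w y] by (simp add: algebra_simps)
  qed
qed

lemma affn_sum: "finite T \<Longrightarrow> (\<And>x. x \<in> T \<Longrightarrow> affn m (g x)) \<Longrightarrow> affn m (\<lambda>w. \<Sum>x\<in>T. g x w)"
proof (induction T rule: finite_induct)
  case empty then show ?case by (simp add: indep_affn indep_const)
next
  case (insert x T)
  then show ?case by (simp add: affn_add)
qed

lemma affn_prod:
  assumes fT: "finite T" and ind: "\<And>x. x \<in> T \<Longrightarrow> x \<noteq> zz \<Longrightarrow> indep m (g x)" and a0: "affn m (g zz)"
  shows "affn m (\<lambda>w. \<Prod>x\<in>T. g x w)"
proof (cases "zz \<in> T")
  case True
  have e: "(\<lambda>w. \<Prod>x\<in>T. g x w) = (\<lambda>w. (\<Prod>x\<in>T - {zz}. g x w) * g zz w)"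
    using True fT by (auto simp: prod.remove mult.commute)
  show ?thesis unfolding e
    by (rule affn_mult_indep[OF indep_prod a0]) (use ind in auto)
next
  case False
  then show ?thesis using ind by (intro indep_affn indep_prod) auto
qed

lemma finite_Ssets: "finite {S. S \<subseteq> {..<r} \<and> (\<iota>::nat) \<in> S}"
  by (rule finite_subset[of _ "Pow {..<r}"]) auto

lemma mlderiv_indep:
  assumes "\<And>\<kappa>. \<kappa> < r \<Longrightarrow> \<kappa> \<noteq> \<iota> \<Longrightarrow> indep m (X \<kappa>)"
  shows "indep m (\<lambda>w. mlderiv r f \<iota> (\<lambda>\<kappa>. X \<kappa> w))"
  unfolding mlderiv_def
  by (intro indep_sum indep_mult indep_const indep_prod) (use assms in auto)

lemma mlderiv_affn:
  assumes ind: "\<And>\<kappa>. \<kappa> < r \<Longrightarrow> \<kappa> \<noteq> \<iota> \<Longrightarrow> \<kappa> \<noteq> kk \<Longrightarrow> indep m (X \<kappa>)"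
    and a0: "affn m (X kk)"
  shows "affn m (\<lambda>w. mlderiv r f \<iota> (\<lambda>\<kappa>. X \<kappa> w))"
  unfolding mlderiv_def
proof (rule affn_sum[OF finite_Ssets])
  fix S assume S: "S \<in> {S. S \<subseteq> {..<r} \<and> \<iota> \<in> S}"
  have "affn m (\<lambda>w. \<Prod>\<kappa>\<in>S - {\<iota>}. X \<kappa> w)"
    by (rule affn_prod[where zz=kk]) (use S ind a0 finite_subset[of S "{..<r}"] in auto)
  then show "affn m (\<lambda>w. fcoef r f S * (\<Prod>\<kappa>\<in>S - {\<iota>}. X \<kappa> w))" by (rule affn_cmult)
qed

lemma mlderiv_cong:
  assumes "\<And>\<kappa>. \<kappa> < r \<Longrightarrow> \<kappa> \<noteq> \<iota> \<Longrightarrow> x \<kappa> = x' \<kappa>"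
  shows "mlderiv r f \<iota> x = mlderiv r f \<iota> x'"
  unfolding mlderiv_def using assms by (intro sum.cong refl arg_cong2[where f="(*)"] prod.cong) auto

lemma mlderiv_zero:
  assumes f1: "\<forall>\<iota><r. fcoef r f {\<iota>} = 0" and z: "\<And>\<kappa>. \<kappa> < r \<Longrightarrow> \<kappa> \<noteq> \<iota> \<Longrightarrow> x \<kappa> = 0"
  shows "mlderiv r f \<iota> x = 0"
  unfolding mlderiv_def
proof (rule sum.neutral, rule ballI)
  fix S assume S: "S \<in> {S. S \<subseteq> {..<r} \<and> \<iota> \<in> S}"
  show "fcoef r f S * (\<Prod>\<kappa>\<in>S - {\<iota>}. x \<kappa>) = 0"
  proof (cases "S = {\<iota>}")
    case True then show ?thesis using f1 S by auto
  next
    case False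
    then obtain \<kappa> where k: "\<kappa> \<in> S" "\<kappa> \<noteq> \<iota>" using S by auto
    have fS: "finite S" using S finite_subset[of S "{..<r}"] by auto
    have "(\<Prod>\<kappa>\<in>S - {\<iota>}. x \<kappa>) = 0"
      using k S z fS by (intro prod_zero) auto
    then show ?thesis by simp
  qed
qed



locale alg = grg V E vtx r i Lg + gsp V \<delta>
  for V :: "'v set" and E :: "'f set" and vtx :: "'f \<Rightarrow> nat \<Rightarrow> 'v" and r :: nat and i :: 'v
    and Lg :: nat and \<delta> :: real +
  fixes f :: "(nat \<Rightarrow> real) \<Rightarrow> real" and d :: nat and Fto :: "nat \<Rightarrow> (nat \<Rightarrow> real) \<Rightarrow> real" and K :: real
  assumes f_deg1: "\<forall>\<iota><r. fcoef r f {\<iota>} = 0"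
    and Fto: "\<forall>k<Lg. Fto k \<in> borel_measurable (PiM {1..k} (\<lambda>_. borel)) \<and>
                 (\<forall>x\<in>space (PiM {1..k} (\<lambda>_. borel :: real measure)). \<bar>Fto k x\<bar> \<le> K)"
begin

abbreviation "WH w l \<equiv> whist r f d E vtx Fto w l"

definition Wm :: "('v \<Rightarrow> real) \<Rightarrow> nat \<Rightarrow> 'v \<Rightarrow> 'f \<Rightarrow> real" where
  "Wm w s j b = WH w s s j b"
definition Um :: "('v \<Rightarrow> real) \<Rightarrow> nat \<Rightarrow> 'v \<Rightarrow> 'f \<Rightarrow> real" where
  "Um w s j b = Wm w s j b - Wm w (s - 1) j b"
definition Zm :: "('v \<Rightarrow> real) \<Rightarrow> nat \<Rightarrow> 'v \<Rightarrow> 'f \<Rightarrow> real" where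
  "Zm w s j b = z_of Fto w (WH w s) s j b"
definition AA :: "('v \<Rightarrow> real) \<Rightarrow> nat \<Rightarrow> 'v \<Rightarrow> 'f \<Rightarrow> real" where
  "AA w t j b = Fto (t - 1) (restrict (\<lambda>t'. Um w t' j b) {1..t - 1})"

lemma WH0: "WH w l 0 = (\<lambda>j b. 0)"
  by (induction l) auto

lemma WH_stable: "s \<le> l \<Longrightarrow> WH w l s = WH w s s"
proof (induction l)
  case 0 then show ?case by simp
next
  case (Suc l)
  show ?case
  proof (cases "s = Suc l")
    case True then show ?thesis by simp
  next
    case False
    then have "s \<le> l" using Suc.prems by simp
    then show ?thesis using Suc.IH False by simp
  qed
qed

lemma Wm0: "Wm w 0 j b = 0" unfolding Wm_def by (simp add: WH0)

lemma uof: "t \<le> l \<Longrightarrow> u_of (WH w l) t j b = Um w t j b"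
  unfolding u_of_def Um_def Wm_def using WH_stable[of t l w] WH_stable[of "t - 1" l w] by simp

lemma Zm_eq: "Zm w s j b = w j + (\<Sum>t\<in>{1..s}. AA w t j b * Um w t j b)"
proof -
  have "Fto (t - 1) (restrict (\<lambda>t. u_of (WH w s) t j b) {1..t - 1}) * u_of (WH w s) t j b
        = AA w t j b * Um w t j b" if "t \<in> {1..s}" for t
  proof -
    have "restrict (\<lambda>t. u_of (WH w s) t j b) {1..t - 1} = restrict (\<lambda>t'. Um w t' j b) {1..t - 1}"
      using that by (intro restrict_ext uof) auto
    then show ?thesis unfolding AA_def using uof[of t s w j b] that by simp
  qed
  then show ?thesis unfolding Zm_def z_of_def by (intro arg_cong2[where f="(+)"] refl sum.cong) auto
qed

lemma Zm0: "Zm w 0 j b = w j" using Zm_eq[of w 0 j b] by simp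

lemma Zm_diff: "1 \<le> s \<Longrightarrow> Zm w s j b = Zm w (s - 1) j b + AA w s j b * Um w s j b"
proof -
  assume s: "1 \<le> s"
  have e: "{1..s} = insert s {1..s-1}" using s by auto
  have "s \<notin> {1..s-1}" by auto
  then show ?thesis unfolding Zm_eq e by (simp add: sum.insert algebra_simps)
qed

definition "k1 = 1 / sqrt (real d - 1)"

definition Gs :: "'f set \<Rightarrow> nat \<Rightarrow> 'v \<Rightarrow> ('v \<Rightarrow> real) \<Rightarrow> real" where
  "Gs T s j w = (\<Sum>c\<in>T. mlderiv r f (pos_in vtx r c j) (\<lambda>\<iota>. Zm w s (vtx c \<iota>) c))"

lemma Wm_Suc: "Wm w (Suc s) j b = k1 * Gs (fac_of E vtx r j - {b}) s j w"
  unfolding Wm_def k1_def Gs_def using WH_stable[of s s w]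
  by (simp add: w_new_def Zm_def)

lemma umsg_eq: "umsg r f d E vtx Fto (Suc l) j a w = Wm w (Suc l) j a - Wm w l j a"
  unfolding umsg_def wmsg_def Wm_def by simp

lemma wfull_eq: "wfull r f d E vtx Fto (Suc s) j w = (1 / sqrt (real d)) * Gs (fac_of E vtx r j) s j w"
  unfolding wfull_def Gs_def Zm_def by simp

lemma wfull0: "wfull r f d E vtx Fto 0 j w = 0" unfolding wfull_def by simp

definition DG :: "'f set \<Rightarrow> nat \<Rightarrow> 'v \<Rightarrow> ('v \<Rightarrow> real) \<Rightarrow> real" where
  "DG T s j w = Gs T s j w - (if s = 0 then 0 else Gs T (s - 1) j w)"

lemma umsg_DG: "umsg r f d E vtx Fto (Suc l) j a w = k1 * DG (fac_of E vtx r j - {a}) l j w"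
proof (cases l)
  case 0 then show ?thesis unfolding umsg_eq DG_def Wm_Suc by (simp add: Wm0)
next
  case (Suc l') then show ?thesis unfolding umsg_eq DG_def by (simp add: Wm_Suc algebra_simps)
qed

lemma ufull_DG: "ufull r f d E vtx Fto (Suc l) j w = (1 / sqrt (real d)) * DG (fac_of E vtx r j) l j w"
proof (cases l)
  case 0 then show ?thesis unfolding ufull_def DG_def wfull_eq by (simp add: wfull0)
next
  case (Suc l') then show ?thesis unfolding ufull_def DG_def by (simp add: wfull_eq algebra_simps)
qed

lemma finE: "finite E" using hyp unfolding hypergraph_def by simp

lemma fin_fac[simp]: "finite (fac_of E vtx r j)"
  by (rule finite_subset[OF _ finE]) (auto simp: fac_of_def)

lemma fac_inc: "c \<in> fac_of E vtx r j \<longleftrightarrow> inc c j" unfolding fac_of_def inc_def by auto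

lemma pos_in: assumes "inc c j"
  shows "pos_in vtx r c j < r \<and> vtx c (pos_in vtx r c j) = j"
    and "\<kappa> < r \<Longrightarrow> vtx c \<kappa> = j \<Longrightarrow> \<kappa> = pos_in vtx r c j"
proof -
  have inj: "inj_on (vtx c) {..<r}" using hyp assms unfolding hypergraph_def inc_def by auto
  obtain \<iota> where io: "\<iota> < r" "vtx c \<iota> = j" using assms unfolding inc_def by auto
  have u: "\<kappa> = \<iota>" if "\<kappa> < r" "vtx c \<kappa> = j" for \<kappa>
  proof -
    have e: "vtx c \<kappa> = vtx c \<iota>" using that(2) io(2) by (rule trans[OF _ sym])
    have m: "\<kappa> \<in> {..<r}" "\<iota> \<in> {..<r}" using that(1) io(1) by auto
    show ?thesis by (rule inj_onD[OF inj e m])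
  qed
  have p: "pos_in vtx r c j = \<iota>" unfolding pos_in_def
  proof (rule the_equality)
    show "\<iota> < r \<and> vtx c \<iota> = j" using io by (rule conjI)
    show "x = \<iota>" if "x < r \<and> vtx c x = j" for x using that by (elim conjE) (rule u)
  qed
  show "pos_in vtx r c j < r \<and> vtx c (pos_in vtx r c j) = j" using p io by simp
  show "\<kappa> < r \<Longrightarrow> vtx c \<kappa> = j \<Longrightarrow> \<kappa> = pos_in vtx r c j" using u p by simp
qed


definition good :: "(('v \<Rightarrow> real) \<Rightarrow> real) \<Rightarrow> bool" where
  "good h \<longleftrightarrow> h \<in> borel_measurable MM \<and> pb h"

lemma pbI: "C \<ge> 0 \<Longrightarrow> (\<And>w. w \<in> space MM \<Longrightarrow> \<bar>h w\<bar> \<le> C * Mf w ^ p) \<Longrightarrow> pb h"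
  unfolding pb_def by blast

lemma pbE: assumes "pb h" obtains C p where "C \<ge> 0" "\<And>w. w \<in> space MM \<Longrightarrow> \<bar>h w\<bar> \<le> C * Mf w ^ p"
  using assms unfolding pb_def by blast

lemma Mf_pow_mono: "p \<le> q \<Longrightarrow> Mf w ^ p \<le> Mf w ^ q"
  by (rule power_increasing[OF _ Mf_ge1])

lemma pb_add: assumes "pb g" "pb h" shows "pb (\<lambda>w. g w + h w)"
proof -
  obtain C1 p1 where 1: "C1 \<ge> 0" "\<And>w. w \<in> space MM \<Longrightarrow> \<bar>g w\<bar> \<le> C1 * Mf w ^ p1" using pbE[OF assms(1)] by blast
  obtain C2 p2 where 2: "C2 \<ge> 0" "\<And>w. w \<in> space MM \<Longrightarrow> \<bar>h w\<bar> \<le> C2 * Mf w ^ p2" using pbE[OF assms(2)] by blast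
  show ?thesis
  proof (rule pbI[where C="C1 + C2" and p="p1 + p2"])
    fix w assume w: "w \<in> space MM"
    have "C1 * Mf w ^ p1 \<le> C1 * Mf w ^ (p1 + p2)" using 1 Mf_pow_mono[of p1 "p1+p2"] by (intro mult_left_mono) auto
    moreover have "C2 * Mf w ^ p2 \<le> C2 * Mf w ^ (p1 + p2)" using 2 Mf_pow_mono[of p2 "p1+p2"] by (intro mult_left_mono) auto
    ultimately show "\<bar>g w + h w\<bar> \<le> (C1 + C2) * Mf w ^ (p1 + p2)"
      using 1(2)[OF w] 2(2)[OF w] by (simp add: algebra_simps)
  qed (use 1 2 in auto)
qed

lemma pb_mult: assumes "pb g" "pb h" shows "pb (\<lambda>w. g w * h w)"
proof -
  obtain C1 p1 where 1: "C1 \<ge> 0" "\<And>w. w \<in> space MM \<Longrightarrow> \<bar>g w\<bar> \<le> C1 * Mf w ^ p1" using pbE[OF assms(1)] by blast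
  obtain C2 p2 where 2: "C2 \<ge> 0" "\<And>w. w \<in> space MM \<Longrightarrow> \<bar>h w\<bar> \<le> C2 * Mf w ^ p2" using pbE[OF assms(2)] by blast
  show ?thesis
  proof (rule pbI[where C="C1 * C2" and p="p1 + p2"])
    fix w assume w: "w \<in> space MM"
    have "\<bar>g w * h w\<bar> = \<bar>g w\<bar> * \<bar>h w\<bar>" by (simp add: abs_mult)
    also have "\<dots> \<le> (C1 * Mf w ^ p1) * (C2 * Mf w ^ p2)"
      using 1(2)[OF w] 2(2)[OF w] by (intro mult_mono) auto
    also have "\<dots> = (C1 * C2) * Mf w ^ (p1 + p2)" by (simp add: power_add algebra_simps)
    finally show "\<bar>g w * h w\<bar> \<le> (C1 * C2) * Mf w ^ (p1 + p2)" .
  qed (use 1 2 in auto)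
qed

lemma good_const: "good (\<lambda>w. c)"
  unfolding good_def by (auto intro!: pbI[where C="\<bar>c\<bar>" and p=0])

lemma good_add: "good g \<Longrightarrow> good h \<Longrightarrow> good (\<lambda>w. g w + h w)"
  unfolding good_def using pb_add by auto

lemma good_mult: "good g \<Longrightarrow> good h \<Longrightarrow> good (\<lambda>w. g w * h w)"
  unfolding good_def using pb_mult by auto

lemma good_cmult: "good h \<Longrightarrow> good (\<lambda>w. c * h w)"
  using good_mult[OF good_const] by blast

lemma good_diff: "good g \<Longrightarrow> good h \<Longrightarrow> good (\<lambda>w. g w - h w)"
  using good_add[of g "\<lambda>w. (-1) * h w"] good_cmult[of h "-1"] by simp

lemma good_sum: "finite T \<Longrightarrow> (\<And>x. x \<in> T \<Longrightarrow> good (g x)) \<Longrightarrow> good (\<lambda>w. \<Sum>x\<in>T. g x w)"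
proof (induction T rule: finite_induct)
  case empty then show ?case by (simp add: good_const)
next
  case (insert x T) then show ?case by (simp add: good_add)
qed

lemma good_prod: "finite T \<Longrightarrow> (\<And>x. x \<in> T \<Longrightarrow> good (g x)) \<Longrightarrow> good (\<lambda>w. \<Prod>x\<in>T. g x w)"
proof (induction T rule: finite_induct)
  case empty then show ?case by (simp add: good_const)
next
  case (insert x T) then show ?case by (simp add: good_mult)
qed

lemma le_Mf: "j \<in> V \<Longrightarrow> \<bar>w j\<bar> \<le> Mf w"
proof -
  assume j: "j \<in> V"
  have e: "Mf w = (1 + \<bar>w j\<bar>) * (\<Prod>k\<in>V - {j}. 1 + \<bar>w k\<bar>)"
    unfolding Mf_def using j finV by (simp add: prod.remove)
  have "1 \<le> (\<Prod>k\<in>V - {j}. 1 + \<bar>w k\<bar>)" by (rule prod_ge_1) auto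
  then have "(1 + \<bar>w j\<bar>) * 1 \<le> (1 + \<bar>w j\<bar>) * (\<Prod>k\<in>V - {j}. 1 + \<bar>w k\<bar>)"
    by (intro mult_left_mono) auto
  then show ?thesis unfolding e by simp
qed

lemma good_comp: "good (\<lambda>w. w j)"
proof (cases "j \<in> V")
  case True
  show ?thesis unfolding good_def
  proof
    show "(\<lambda>w. w j) \<in> borel_measurable MM" by (rule comp_meas[OF True])
    show "pb (\<lambda>w. w j)" by (rule pbI[where C=1 and p=1]) (use le_Mf[OF True] in auto)
  qed
next
  case False
  have sp: "w j = undefined" if "w \<in> space MM" for w using that False unfolding space_MM by (auto simp: PiE_def extensional_def)
  show ?thesis unfolding good_def
  proof
    show "(\<lambda>w. w j) \<in> borel_measurable MM"
      using measurable_cong[of MM "\<lambda>w. w j" "\<lambda>w. undefined"] sp by simp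
    show "pb (\<lambda>w. w j)"
    proof (rule pbI[where C="\<bar>undefined\<bar>" and p=0])
      fix w assume "w \<in> space MM"
      then show "\<bar>w j\<bar> \<le> \<bar>undefined\<bar> * Mf w ^ 0" by (simp add: sp)
    qed simp
  qed
qed

lemma good_bdd: assumes "h \<in> borel_measurable MM" "\<And>w. w \<in> space MM \<Longrightarrow> \<bar>h w\<bar> \<le> C" shows "good h"
  unfolding good_def
proof (intro conjI assms(1) pbI[where C="\<bar>C\<bar>" and p=0])
  fix w assume "w \<in> space MM"
  then show "\<bar>h w\<bar> \<le> \<bar>C\<bar> * Mf w ^ 0" using assms(2)[of w] by simp
qed simp

lemma good_meas: "good h \<Longrightarrow> h \<in> borel_measurable MM" unfolding good_def by simp

lemma good_AA:
  assumes t: "1 \<le> t" "t - 1 < Lg" and um: "\<And>t'. t' \<in> {1..t-1} \<Longrightarrow> (\<lambda>w. Um w t' j b) \<in> borel_measurable MM"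
  shows "good (\<lambda>w. AA w t j b)"
proof (rule good_bdd)
  have F: "Fto (t-1) \<in> borel_measurable (PiM {1..t-1} (\<lambda>_. borel))" using Fto t by auto
  have R: "(\<lambda>w. restrict (\<lambda>t'. Um w t' j b) {1..t-1}) \<in> measurable MM (PiM {1..t-1} (\<lambda>_. borel))"
    by (rule measurable_restrict) (rule um)
  show "(\<lambda>w. AA w t j b) \<in> borel_measurable MM"
    unfolding AA_def using measurable_comp[OF R F] by (simp add: o_def)
  fix w
  have "restrict (\<lambda>t'. Um w t' j b) {1..t-1} \<in> space (PiM {1..t-1} (\<lambda>_. borel :: real measure))"
    by (simp add: space_PiM)
  then show "\<bar>AA w t j b\<bar> \<le> K" unfolding AA_def using Fto t by auto
qed

lemma good_mlderiv: "(\<And>\<kappa>. \<kappa> < r \<Longrightarrow> good (X \<kappa>)) \<Longrightarrow> good (\<lambda>w. mlderiv r f \<iota> (\<lambda>\<kappa>. X \<kappa> w))"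
  unfolding mlderiv_def
  by (intro good_sum finite_Ssets good_cmult good_prod) (auto intro: finite_subset[of _ "{..<r}"])

lemma GOOD: "s \<le> Lg \<Longrightarrow> \<forall>t\<le>s. \<forall>j b. good (\<lambda>w. Wm w t j b) \<and> good (\<lambda>w. Zm w t j b)"
proof (induction s)
  case 0
  show ?case by (simp add: Wm0 Zm0 good_const good_comp)
next
  case (Suc s)
  then have IH: "\<forall>t\<le>s. \<forall>j b. good (\<lambda>w. Wm w t j b) \<and> good (\<lambda>w. Zm w t j b)" by simp
  have W: "good (\<lambda>w. Wm w (Suc s) j b)" for j b
    unfolding Wm_Suc Gs_def using IH by (intro good_cmult good_sum good_mlderiv) auto
  have Wall: "good (\<lambda>w. Wm w t j b)" if "t \<le> Suc s" for t j b
    using IH W that by (cases "t = Suc s") auto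
  have U: "good (\<lambda>w. Um w t j b)" if "t \<le> Suc s" for t j b
    unfolding Um_def using Wall that by (intro good_diff) auto
  have Z: "good (\<lambda>w. Zm w (Suc s) j b)" for j b
    unfolding Zm_eq
  proof (intro good_add good_comp good_sum finite_atLeastAtMost good_mult)
    fix t assume t: "t \<in> {1..Suc s}"
    show "good (\<lambda>w. Um w t j b)" using U t by auto
    show "good (\<lambda>w. AA w t j b)"
      by (rule good_AA) (use t Suc.prems in auto, use U t in \<open>auto intro: good_meas\<close>)
  qed
  show ?case using Wall Z IH by (auto simp: le_Suc_eq)
qed

end


context alg
begin

lemma inc_sh_R: "inc c j \<Longrightarrow> inc c k \<Longrightarrow> Reach k s \<subseteq> Reach j (Suc s)"
proof
  fix x assume c: "inc c j" "inc c k" and x: "x \<in> Reach k s"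
  have "sh j k" using c unfolding sh_def by blast
  then have k1: "k \<in> Reach j 1" by (auto intro: R_step[OF R_self])
  have "x \<in> Reach j (1 + s)" by (rule R_trans[OF x k1])
  then show "x \<in> Reach j (Suc s)" by (simp only: plus_1_eq_Suc)
qed

lemma vtx_inc: "inc c j \<Longrightarrow> \<iota> < r \<Longrightarrow> inc c (vtx c \<iota>)" unfolding inc_def by auto

lemma indep_AA: "(\<And>t'. t' \<in> {1..t-1} \<Longrightarrow> indep m (\<lambda>w. Um w t' j b)) \<Longrightarrow> indep m (\<lambda>w. AA w t j b)"
  unfolding AA_def by (rule indep_fun[where F="Fto (t - 1)"], rule indep_restrict) auto

lemma IND: "\<forall>j b m. m \<notin> Reach j s \<longrightarrow> indep m (\<lambda>w. Wm w s j b) \<and> indep m (\<lambda>w. Zm w s j b)"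
proof (induction s rule: less_induct)
  case (less s)
  have W: "indep m (\<lambda>w. Wm w s j b)" if m: "m \<notin> Reach j s" for j b m
  proof (cases s)
    case 0 then show ?thesis by (simp add: Wm0 indep_const)
  next
    case (Suc s')
    show ?thesis unfolding Suc Wm_Suc Gs_def
    proof (intro indep_mult[OF indep_const] indep_sum mlderiv_indep)
      fix c \<kappa> assume c: "c \<in> fac_of E vtx r j - {b}" and k: "\<kappa> < r"
      have ic: "inc c j" using c fac_inc by auto
      have "Reach (vtx c \<kappa>) s' \<subseteq> Reach j s" using inc_sh_R[OF ic vtx_inc[OF ic k]] Suc by simp
      then have "m \<notin> Reach (vtx c \<kappa>) s'" using m by auto
      then show "indep m (\<lambda>w. Zm w s' (vtx c \<kappa>) c)" using less.IH[of s'] Suc by auto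
    qed
  qed
  have U: "indep m (\<lambda>w. Um w t j b)" if m: "m \<notin> Reach j s" and t: "t \<le> s" for j b m t
  proof -
    have Wt: "indep m (\<lambda>w. Wm w t' j b)" if "t' \<le> s" for t'
    proof (cases "t' = s")
      case True then show ?thesis using W m by simp
    next
      case False
      then have "m \<notin> Reach j t'" using m R_mono[OF that] by auto
      then show ?thesis using less.IH[of t'] False that by auto
    qed
    show ?thesis unfolding Um_def using Wt t by (intro indep_diff) auto
  qed
  have Z: "indep m (\<lambda>w. Zm w s j b)" if m: "m \<notin> Reach j s" for j b m
  proof -
    have mj: "m \<noteq> j" using m R_self by auto
    show ?thesis unfolding Zm_eq
    proof (intro indep_add indep_comp[OF mj] indep_sum indep_mult)
      fix t assume t: "t \<in> {1..s}"
      show "indep m (\<lambda>w. Um w t j b)" using U[OF m] t by auto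
      show "indep m (\<lambda>w. AA w t j b)" by (rule indep_AA) (use U[OF m] t in auto)
    qed
  qed
  show ?case using W Z by blast
qed

lemma INDW: "m \<notin> Reach j s \<Longrightarrow> indep m (\<lambda>w. Wm w s j b)" using IND by blast
lemma INDZ: "m \<notin> Reach j s \<Longrightarrow> indep m (\<lambda>w. Zm w s j b)" using IND by blast
lemma INDU: "m \<notin> Reach j s \<Longrightarrow> t \<le> s \<Longrightarrow> indep m (\<lambda>w. Um w t j b)"
proof -
  assume m: "m \<notin> Reach j s" and t: "t \<le> s"
  have "t - 1 \<le> s" using t by simp
  then have "m \<notin> Reach j t" "m \<notin> Reach j (t - 1)" using m R_mono[OF t, of j] R_mono[of "t - 1" s j] by auto
  then show ?thesis unfolding Um_def by (intro indep_diff INDW)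
qed


lemma vtx_inj: "inc c k \<Longrightarrow> \<kappa> < r \<Longrightarrow> \<kappa>' < r \<Longrightarrow> vtx c \<kappa> = vtx c \<kappa>' \<Longrightarrow> \<kappa> = \<kappa>'"
proof -
  assume a: "inc c k" "\<kappa> < r" "\<kappa>' < r" "vtx c \<kappa> = vtx c \<kappa>'"
  have inj: "inj_on (vtx c) {..<r}" using hyp a unfolding hypergraph_def inc_def by auto
  show ?thesis by (rule inj_onD[OF inj a(4)]) (use a in auto)
qed

lemma child_affn:
  assumes ck: "inc c' k" and D: "1 \<le> D" "D + s \<le> Lg"
    and kids: "\<And>\<kappa>. \<kappa> < r \<Longrightarrow> \<kappa> \<noteq> pos_in vtx r c' k \<Longrightarrow> reach (vtx c' \<kappa>) \<and> dep (vtx c' \<kappa>) = D"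
    and m: "m \<notin> Reach i (D + s - 1)"
    and aff: "\<And>\<kappa>. \<kappa> < r \<Longrightarrow> \<kappa> \<noteq> pos_in vtx r c' k \<Longrightarrow> m \<in> Reach (vtx c' \<kappa>) s \<Longrightarrow> affn m (\<lambda>w. Zm w s (vtx c' \<kappa>) c')"
  shows "affn m (\<lambda>w. mlderiv r f (pos_in vtx r c' k) (\<lambda>\<kappa>. Zm w s (vtx c' \<kappa>) c'))"
proof (cases "\<exists>\<kappa>. \<kappa> < r \<and> \<kappa> \<noteq> pos_in vtx r c' k \<and> m \<in> Reach (vtx c' \<kappa>) s")
  case True
  then obtain k0 where k0: "k0 < r" "k0 \<noteq> pos_in vtx r c' k" "m \<in> Reach (vtx c' k0) s" by blast
  show ?thesis
  proof (rule mlderiv_affn[where kk=k0])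
    show "affn m (\<lambda>w. Zm w s (vtx c' k0) c')" by (rule aff[OF k0])
    fix \<kappa> assume k: "\<kappa> < r" "\<kappa> \<noteq> pos_in vtx r c' k" "\<kappa> \<noteq> k0"
    show "indep m (\<lambda>w. Zm w s (vtx c' \<kappa>) c')"
    proof (rule INDZ, rule notI)
      assume mk: "m \<in> Reach (vtx c' \<kappa>) s"
      have r0: "reach (vtx c' k0)" "dep (vtx c' k0) = D" using kids k0 by auto
      have r1: "reach (vtx c' \<kappa>)" "dep (vtx c' \<kappa>) = D" using kids k by auto
      have "m \<in> Reach i (D + s)" using R_trans[OF mk] r1 R_iff by auto
      then have "reach m" using R_iff by auto
      then have dm: "D + s \<le> dep m" using m R_iff D by auto
      have "vtx c' \<kappa> = vtx c' k0" by (rule anc_uniq[OF r1(1) r0(1) r1(2) r0(2) D(2) mk k0(3) dm])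
      then have "\<kappa> = k0" using vtx_inj[OF ck k(1) k0(1)] by simp
      then show False using k by simp
    qed
  qed
next
  case False
  show ?thesis
  proof (rule indep_affn, rule mlderiv_indep)
    fix \<kappa> assume k: "\<kappa> < r" "\<kappa> \<noteq> pos_in vtx r c' k"
    show "indep m (\<lambda>w. Zm w s (vtx c' \<kappa>) c')" by (rule INDZ) (use False k in blast)
  qed
qed

lemma NC: "\<forall>k c m. reach k \<longrightarrow> 1 \<le> dep k \<longrightarrow> inc c k \<longrightarrow> (\<exists>z. inc c z \<and> dep z = dep k - 1) \<longrightarrow>
    dep k + s \<le> Lg \<longrightarrow> (s = 0 \<or> m \<notin> Reach i (dep k + s - 1)) \<longrightarrow> affn m (\<lambda>w. Zm w s k c)"
proof (induction s)
  case 0 then show ?case by (simp add: Zm0 affn_comp)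
next
  case (Suc s)
  show ?case
  proof (intro allI impI)
    fix k c m
    assume rk: "reach k" and dk: "1 \<le> dep k" and ck: "inc c k" and pz: "\<exists>z. inc c z \<and> dep z = dep k - 1"
      and bd: "dep k + Suc s \<le> Lg" and mm: "Suc s = 0 \<or> m \<notin> Reach i (dep k + Suc s - 1)"
    have m: "m \<notin> Reach i (dep k + s)" using mm by simp
    obtain z where z: "inc c z" "dep z = dep k - 1" using pz by blast
    have ki: "k \<in> Reach i (dep k)" using dep_in[OF rk] .
    have mks: "m \<notin> Reach k s"
    proof
      assume "m \<in> Reach k s" then show False using R_trans[OF _ ki] m by blast
    qed
    have mk: "m \<noteq> k" using mks R_self by auto
    have Ut: "indep m (\<lambda>w. Um w t k c)" if "t \<le> s" for t by (rule INDU[OF mks that])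
    have At: "indep m (\<lambda>w. AA w t k c)" if "t \<le> Suc s" for t
      by (rule indep_AA) (use Ut that in auto)
    have WS: "affn m (\<lambda>w. Wm w (Suc s) k c)"
      unfolding Wm_Suc Gs_def
    proof (intro affn_cmult affn_sum)
      show "finite (fac_of E vtx r k - {c})" by simp
      fix c' assume c': "c' \<in> fac_of E vtx r k - {c}"
      have ck': "inc c' k" and cc: "c' \<noteq> c" using c' fac_inc by auto
      have kids: "reach (vtx c' \<kappa>) \<and> dep (vtx c' \<kappa>) = Suc (dep k)"
        if "\<kappa> < r" "\<kappa> \<noteq> pos_in vtx r c' k" for \<kappa>
      proof -
        have ne: "vtx c' \<kappa> \<noteq> k" using pos_in(2)[OF ck' that(1)] that(2) by auto
        have ik: "inc c' (vtx c' \<kappa>)" by (rule vtx_inc[OF ck' that(1)])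
        have "dep (vtx c' \<kappa>) = Suc (dep k)"
          by (rule child[OF rk refl dk _ ck z ck' cc ik ne]) (use bd in simp)
        moreover have "reach (vtx c' \<kappa>)" using sh_dep[OF rk, of "vtx c' \<kappa>"] ck' ik unfolding sh_def by blast
        ultimately show ?thesis by simp
      qed
      show "affn m (\<lambda>w. mlderiv r f (pos_in vtx r c' k) (\<lambda>\<kappa>. Zm w s (vtx c' \<kappa>) c'))"
      proof (rule child_affn[OF ck' _ _ kids])
        show "1 \<le> Suc (dep k)" by simp
        show "Suc (dep k) + s \<le> Lg" using bd by simp
        show "m \<notin> Reach i (Suc (dep k) + s - 1)" using m by simp
        fix \<kappa> assume k: "\<kappa> < r" "\<kappa> \<noteq> pos_in vtx r c' k"
        have kd: "reach (vtx c' \<kappa>)" "dep (vtx c' \<kappa>) = Suc (dep k)" using kids[OF k] by auto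
        have ik: "inc c' (vtx c' \<kappa>)" by (rule vtx_inc[OF ck' k(1)])
        have p: "\<exists>z. inc c' z \<and> dep z = dep (vtx c' \<kappa>) - 1" using ck' kd by auto
        show "affn m (\<lambda>w. Zm w s (vtx c' \<kappa>) c')"
          by (rule Suc.IH[rule_format, OF kd(1) _ ik p]) (use kd bd m in auto)
      qed auto
    qed
    have US: "affn m (\<lambda>w. Um w (Suc s) k c)"
      unfolding Um_def using WS by (rule affn_diff) (use INDW[OF mks] in \<open>auto intro: indep_affn\<close>)
    show "affn m (\<lambda>w. Zm w (Suc s) k c)"
      unfolding Zm_eq
    proof (intro affn_add indep_affn[OF indep_comp] affn_sum)
      show "m \<noteq> k" by (rule mk)
      show "finite {1..Suc s}" by simp
      fix t assume t: "t \<in> {1..Suc s}"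
      show "affn m (\<lambda>w. AA w t k c * Um w t k c)"
      proof (cases "t = Suc s")
        case True
        then show ?thesis using affn_mult_indep[OF At US] by simp
      next
        case False
        then have "t \<le> s" using t by auto
        then show ?thesis using At Ut t by (intro indep_affn indep_mult) auto
      qed
    qed
  qed
qed


lemma Reach_V: "Reach i t \<subseteq> V"
proof (induction t)
  case 0 then show ?case using iV by simp
next
  case (Suc t)
  have "x \<in> V" if "sh y x" for x y using that inc_V unfolding sh_def by blast
  then show ?case using Suc by auto
qed

lemma reach_V: "reach x \<Longrightarrow> x \<in> V" using Reach_V dep_in by blast

lemma root_kids: "inc c i \<Longrightarrow> \<kappa> < r \<Longrightarrow> \<kappa> \<noteq> pos_in vtx r c i \<Longrightarrow> reach (vtx c \<kappa>) \<and> dep (vtx c \<kappa>) = 1"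
proof -
  assume a: "inc c i" "\<kappa> < r" "\<kappa> \<noteq> pos_in vtx r c i"
  have ne: "vtx c \<kappa> \<noteq> i" using pos_in(2)[OF a(1) a(2)] a(3) by auto
  show ?thesis by (rule child_root[OF a(1) vtx_inc[OF a(1) a(2)] ne])
qed

lemma AFFROOT:
  assumes T: "T \<subseteq> fac_of E vtx r i" and l: "Suc l \<le> Lg" and m: "m \<notin> Reach i l"
  shows "affn m (\<lambda>w. DG T l i w)"
proof -
  have fT: "finite T" using finite_subset[OF T fin_fac] .
  have G1: "affn m (\<lambda>w. Gs T l i w)"
    unfolding Gs_def
  proof (rule affn_sum[OF fT])
    fix c assume c: "c \<in> T"
    have ci: "inc c i" using c T fac_inc by auto
    show "affn m (\<lambda>w. mlderiv r f (pos_in vtx r c i) (\<lambda>\<kappa>. Zm w l (vtx c \<kappa>) c))"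
    proof (rule child_affn[OF ci _ _ root_kids[OF ci]])
      show "1 \<le> (1::nat)" by simp
      show "1 + l \<le> Lg" using l by simp
      show "m \<notin> Reach i (1 + l - 1)" using m by simp
      fix \<kappa> assume k: "\<kappa> < r" "\<kappa> \<noteq> pos_in vtx r c i"
      have kd: "reach (vtx c \<kappa>)" "dep (vtx c \<kappa>) = 1" using root_kids[OF ci k] by auto
      have ik: "inc c (vtx c \<kappa>)" by (rule vtx_inc[OF ci k(1)])
      have p: "\<exists>z. inc c z \<and> dep z = dep (vtx c \<kappa>) - 1" using ci kd dep_i by auto
      show "affn m (\<lambda>w. Zm w l (vtx c \<kappa>) c)"
        by (rule NC[rule_format, OF kd(1) _ ik p]) (use kd l m in auto)
    qed auto
  qed
  have G0: "indep m (\<lambda>w. Gs T (l - 1) i w)" if "1 \<le> l"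
    unfolding Gs_def
  proof (intro indep_sum mlderiv_indep)
    fix c \<kappa> assume c: "c \<in> T" and k: "\<kappa> < r"
    have ci: "inc c i" using c T fac_inc by auto
    have "Reach (vtx c \<kappa>) (l - 1) \<subseteq> Reach i (Suc (l - 1))" by (rule inc_sh_R[OF ci vtx_inc[OF ci k]])
    then have "m \<notin> Reach (vtx c \<kappa>) (l - 1)" using m that by auto
    then show "indep m (\<lambda>w. Zm w (l - 1) (vtx c \<kappa>) c)" by (rule INDZ)
  qed
  show ?thesis
  proof (cases "l = 0")
    case True then show ?thesis using G1 unfolding DG_def by simp
  next
    case False
    then show ?thesis using G1 G0 unfolding DG_def by (simp add: affn_diff indep_affn)
  qed
qed

context
  fixes w0 :: "'v \<Rightarrow> real" and l :: nat
  assumes H0: "\<And>m. m \<in> V \<Longrightarrow> m \<notin> Reach i l \<Longrightarrow> w0 m = 0" and lL: "Suc l \<le> Lg"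
begin

lemma kid_zero:
  assumes "reach k'" "dep k' = Suc l"
  shows "w0 k' = 0"
proof (rule H0)
  show "k' \<notin> Reach i l" using assms R_iff by auto
  show "k' \<in> V" using reach_V[OF assms(1)] .
qed

lemma VCs: "\<forall>k c. 1 \<le> s \<longrightarrow> reach k \<longrightarrow> 1 \<le> dep k \<longrightarrow> inc c k \<longrightarrow> (\<exists>z. inc c z \<and> dep z = dep k - 1) \<longrightarrow>
   dep k + s = Suc l \<longrightarrow> Um w0 s k c = 0"
proof (induction s)
  case 0 then show ?case by simp
next
  case (Suc s)
  show ?case
  proof (intro allI impI)
    fix k c
    assume rk: "reach k" and dk: "1 \<le> dep k" and ck: "inc c k" and pz: "\<exists>z. inc c z \<and> dep z = dep k - 1"
      and ds: "dep k + Suc s = Suc l"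
    obtain z where z: "inc c z" "dep z = dep k - 1" using pz by blast
    have kids: "reach (vtx c' \<kappa>) \<and> dep (vtx c' \<kappa>) = Suc (dep k) \<and> inc c' (vtx c' \<kappa>)"
      if c': "c' \<in> fac_of E vtx r k - {c}" and k: "\<kappa> < r" "\<kappa> \<noteq> pos_in vtx r c' k" for c' \<kappa>
    proof -
      have ck': "inc c' k" and cc: "c' \<noteq> c" using c' fac_inc by auto
      have ne: "vtx c' \<kappa> \<noteq> k" using pos_in(2)[OF ck' k(1)] k(2) by auto
      have ik: "inc c' (vtx c' \<kappa>)" by (rule vtx_inc[OF ck' k(1)])
      have "dep (vtx c' \<kappa>) = Suc (dep k)"
        by (rule child[OF rk refl dk _ ck z ck' cc ik ne]) (use ds lL in simp)
      moreover have "reach (vtx c' \<kappa>)" using sh_dep[OF rk, of "vtx c' \<kappa>"] ck' ik unfolding sh_def by blast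
      ultimately show ?thesis using ik by simp
    qed
    show "Um w0 (Suc s) k c = 0"
    proof (cases s)
      case 0
      have "Gs (fac_of E vtx r k - {c}) 0 k w0 = 0"
        unfolding Gs_def
      proof (rule sum.neutral, rule ballI, rule mlderiv_zero[OF f_deg1])
        fix c' \<kappa> assume c': "c' \<in> fac_of E vtx r k - {c}" and k: "\<kappa> < r" "\<kappa> \<noteq> pos_in vtx r c' k"
        have kd: "reach (vtx c' \<kappa>)" "dep (vtx c' \<kappa>) = Suc l" using kids[OF c' k] ds 0 by auto
        show "Zm w0 0 (vtx c' \<kappa>) c' = 0" unfolding Zm0 by (rule kid_zero[OF kd])
      qed
      then show ?thesis unfolding Um_def Wm_Suc 0 by (simp add: Wm0)
    next
      case (Suc s')
      have "Gs (fac_of E vtx r k - {c}) s k w0 = Gs (fac_of E vtx r k - {c}) s' k w0"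
        unfolding Gs_def
      proof (rule sum.cong[OF refl], rule mlderiv_cong)
        fix c' \<kappa> assume c': "c' \<in> fac_of E vtx r k - {c}" and k: "\<kappa> < r" "\<kappa> \<noteq> pos_in vtx r c' k"
        have kd: "reach (vtx c' \<kappa>)" "dep (vtx c' \<kappa>) = Suc (dep k)" "inc c' (vtx c' \<kappa>)" using kids[OF c' k] by auto
        have ck': "inc c' k" using c' fac_inc by auto
        have p: "\<exists>z. inc c' z \<and> dep z = dep (vtx c' \<kappa>) - 1" using ck' kd by auto
        have "Um w0 s (vtx c' \<kappa>) c' = 0"
          by (rule Suc.IH[rule_format, OF _ kd(1) _ kd(3) p]) (use Suc kd ds in auto)
        then show "Zm w0 s (vtx c' \<kappa>) c' = Zm w0 s' (vtx c' \<kappa>) c'"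
          using Zm_diff[of s w0 "vtx c' \<kappa>" c'] Suc by simp
      qed
      then show ?thesis by (simp add: Um_def Wm_Suc Suc)
    qed
  qed
qed

lemma VCROOT:
  assumes T: "T \<subseteq> fac_of E vtx r i"
  shows "DG T l i w0 = 0"
proof (cases "l = 0")
  case True
  have "Gs T 0 i w0 = 0"
    unfolding Gs_def
  proof (rule sum.neutral, rule ballI, rule mlderiv_zero[OF f_deg1])
    fix c \<kappa> assume c: "c \<in> T" and k: "\<kappa> < r" "\<kappa> \<noteq> pos_in vtx r c i"
    have ci: "inc c i" using c T fac_inc by auto
    have kd: "reach (vtx c \<kappa>)" "dep (vtx c \<kappa>) = Suc l" using root_kids[OF ci k] True by auto
    show "Zm w0 0 (vtx c \<kappa>) c = 0" unfolding Zm0 by (rule kid_zero[OF kd])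
  qed
  then show ?thesis unfolding DG_def using True by simp
next
  case False
  have "Gs T l i w0 = Gs T (l - 1) i w0"
    unfolding Gs_def
  proof (rule sum.cong[OF refl], rule mlderiv_cong)
    fix c \<kappa> assume c: "c \<in> T" and k: "\<kappa> < r" "\<kappa> \<noteq> pos_in vtx r c i"
    have ci: "inc c i" using c T fac_inc by auto
    have kd: "reach (vtx c \<kappa>)" "dep (vtx c \<kappa>) = 1" using root_kids[OF ci k] by auto
    have ik: "inc c (vtx c \<kappa>)" by (rule vtx_inc[OF ci k(1)])
    have p: "\<exists>z. inc c z \<and> dep z = dep (vtx c \<kappa>) - 1" using ci kd dep_i by auto
    have "Um w0 l (vtx c \<kappa>) c = 0"
      by (rule VCs[rule_format, OF _ kd(1) _ ik p]) (use False kd in auto)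
    then show "Zm w0 l (vtx c \<kappa>) c = Zm w0 (l - 1) (vtx c \<kappa>) c"
      using Zm_diff[of l w0 "vtx c \<kappa>" c] False by simp
  qed
  then show ?thesis unfolding DG_def using False by simp
qed

end


lemma good_Gs: "T \<subseteq> fac_of E vtx r j \<Longrightarrow> s \<le> Lg \<Longrightarrow> good (\<lambda>w. Gs T s j w)"
  unfolding Gs_def
  by (intro good_sum good_mlderiv) (use finite_subset[OF _ fin_fac] GOOD[of s] in auto)

lemma good_DG: "T \<subseteq> fac_of E vtx r j \<Longrightarrow> s \<le> Lg \<Longrightarrow> good (\<lambda>w. DG T s j w)"
proof -
  assume a: "T \<subseteq> fac_of E vtx r j" "s \<le> Lg"
  show ?thesis
  proof (cases "s = 0")
    case True then show ?thesis unfolding DG_def using good_Gs[OF a] by simp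
  next
    case False
    then show ?thesis unfolding DG_def using good_Gs[OF a(1)] a(2) by (simp add: good_diff)
  qed
qed

lemma root_main:
  assumes T: "T \<subseteq> fac_of E vtx r i" and l: "Suc l \<le> Lg" and g: "g = (\<lambda>w. \<kappa> * DG T l i w)"
  shows "integrable MM g \<and> (AE w in MM. real_cond_exp MM (gen_sigma MM (ball_var V E vtx r i l)) g w = 0)"
proof -
  have gg: "good g" unfolding g using good_DG[OF T] l by (intro good_cmult) auto
  have af: "\<forall>m\<in>V - V \<inter> Reach i l. affsp m g"
  proof
    fix m assume m: "m \<in> V - V \<inter> Reach i l"
    have "affn m g" unfolding g using AFFROOT[OF T l] m by (intro affn_cmult) auto
    then show "affsp m g" unfolding affn_def affsp_def by blast
  qed
  have z: "\<forall>w\<in>space MM. g (set0 (V - V \<inter> Reach i l) w) = 0"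
  proof
    fix w
    have "DG T l i (set0 (V - V \<inter> Reach i l) w) = 0"
      by (rule VCROOT[OF _ l T]) (auto simp: set0_def)
    then show "g (set0 (V - V \<inter> Reach i l) w) = 0" unfolding g by simp
  qed
  show ?thesis unfolding ball_eq
    by (rule cond_exp_zero) (use gg af z in \<open>auto simp: good_def\<close>)
qed

end


theorem mainTheorem4:
  fixes r d :: nat and f :: "(nat \<Rightarrow> real) \<Rightarrow> real" and \<delta> K :: real
    and V :: "'v set" and E :: "'f set" and vtx :: "'f \<Rightarrow> nat \<Rightarrow> 'v"
    and Fto Fl :: "nat \<Rightarrow> (nat \<Rightarrow> real) \<Rightarrow> real"
    and i :: 'v and a :: 'f and l :: nat
  assumes r: "r \<ge> 2"
    and f_bool: "\<forall>x\<in>cube r. f x \<in> {0, 1}"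
    and f_deg1: "\<forall>\<iota><r. fcoef r f {\<iota>} = 0"
    and delta: "\<delta> > 0"
    and hyp: "hypergraph V E vtx r"
    and reg: "index_regular V E vtx r d"
    and girth: "girth_ge E vtx r (4 * nat \<lfloor>1 / \<delta>\<rfloor> + 4)"
    and K: "K > 0"
    and Fto: "\<forall>k < nat \<lfloor>1 / \<delta>\<rfloor>. Fto k \<in> borel_measurable (PiM {1..k} (\<lambda>_. borel)) \<and>
                 (\<forall>x\<in>space (PiM {1..k} (\<lambda>_. borel :: real measure)). \<bar>Fto k x\<bar> \<le> K)"
    and Fl: "\<forall>k < nat \<lfloor>1 / \<delta>\<rfloor>. Fl k \<in> borel_measurable (PiM {1..k} (\<lambda>_. borel)) \<and>
                 (\<forall>x\<in>space (PiM {1..k} (\<lambda>_. borel :: real measure)). \<bar>Fl k x\<bar> \<le> K)"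
    and i: "i \<in> V"
    and a: "a \<in> fac_of E vtx r i"
    and l: "l < nat \<lfloor>1 / \<delta>\<rfloor>"
  shows "integrable (gauss_space \<delta> V) (umsg r f d E vtx Fto (Suc l) i a) \<and>
         (AE \<omega> in gauss_space \<delta> V.
            real_cond_exp (gauss_space \<delta> V)
              (gen_sigma (gauss_space \<delta> V) (ball_var V E vtx r i l))
              (umsg r f d E vtx Fto (Suc l) i a) \<omega> = 0) \<and>
         integrable (gauss_space \<delta> V) (ufull r f d E vtx Fto (Suc l) i) \<and>
         (AE \<omega> in gauss_space \<delta> V.
            real_cond_exp (gauss_space \<delta> V)
              (gen_sigma (gauss_space \<delta> V) (ball_var V E vtx r i l))
              (ufull r f d E vtx Fto (Suc l) i) \<omega> = 0)"
proof -
  define L where "L = nat \<lfloor>1 / \<delta>\<rfloor>"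
  have finV: "finite V" using hyp unfolding hypergraph_def by simp
  interpret A: alg V E vtx r i L \<delta> f d Fto K
  proof (unfold_locales)
    show "hypergraph V E vtx r" by (rule hyp)
    show "i \<in> V" by (rule i)
    show "girth_ge E vtx r (4 * L + 4)" using girth unfolding L_def .
    show "2 \<le> r" by (rule r)
    show "finite V" by (rule finV)
    show "0 < \<delta>" by (rule delta)
    show "\<forall>\<iota><r. fcoef r f {\<iota>} = 0" by (rule f_deg1)
    show "\<forall>k<L. Fto k \<in> borel_measurable (PiM {1..k} (\<lambda>_. borel)) \<and>
                 (\<forall>x\<in>space (PiM {1..k} (\<lambda>_. borel :: real measure)). \<bar>Fto k x\<bar> \<le> K)"
      using Fto unfolding L_def .
  qed
  have lL: "Suc l \<le> L" using l unfolding L_def by simp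
  have ai: "A.inc a i" using a A.fac_inc by auto
  have T1: "fac_of E vtx r i - {a} \<subseteq> fac_of E vtx r i" by auto
  note R1 = A.root_main[OF T1 lL, of "umsg r f d E vtx Fto (Suc l) i a" A.k1]
  note R2 = A.root_main[OF subset_refl lL, of "ufull r f d E vtx Fto (Suc l) i" "1 / sqrt (real d)"]
  have e1: "umsg r f d E vtx Fto (Suc l) i a = (\<lambda>w. A.k1 * A.DG (fac_of E vtx r i - {a}) l i w)"
    by (rule ext) (rule A.umsg_DG)
  have e2: "ufull r f d E vtx Fto (Suc l) i = (\<lambda>w. 1 / sqrt (real d) * A.DG (fac_of E vtx r i) l i w)"
    by (rule ext) (rule A.ufull_DG)
  show ?thesis using R1[OF e1] R2[OF e2] by blast
qed


end
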